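(* Every fan in $\mathsf{c}\text{-}\mathsf{Fan}^{+-}_{\rm sc}(2)$ can be obtained from the fan $\Sigma(0,0;0,0)$, whose 2-dimensional cones are the four closed coordinate quadrants, by a finite sequence of subdivisions.
   Context: $\mathsf{c}\text{-}\mathsf{Fan}^{+-}_{\rm sc}(2)$ is the set of complete fans $\Sigma$ in $\mathbb{R}^2$ (cones strongly convex rational polyhedral) that are nonsingular (each 2-dimensional cone is generated by a $\mathbb{Z}$-basis of $\mathbb{Z}^2$), contain $\operatorname{cone}\{(1,0),(0,1)\}$, $\operatorname{cone}\{(-1,0),(0,-1)\}$ and $\operatorname{cone}\{(-1,0),(0,1)\}$, have every cone contained in a closed coordinate quadrant, and have every ray a face of exactly two 2-dimensional cones. Subdivision: for a 2-dimensional cone $\sigma=\operatorname{cone}\{u,v\}$ ($u,v$ primitive) of a nonsingular fan $\Sigma$, $D_\sigma(\Sigma)$ has rays $\Sigma_1\cup\{\mathbb{R}_{\ge0}(u+v)\}$ and 2-dimensional cones $(\Sigma_2\setminus\{\sigma\})\cup\{\operatorname{cone}\{u,u+v\},\operatorname{cone}\{v,u+v\}\}$. *)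

theory Defs
  imports "HOL-Analysis.Analysis"
begin

type_synonym lvec = "int \<times> int"
type_synonym cone2 = "(real \<times> real) set"

definition rv :: "lvec \<Rightarrow> real \<times> real" where
  "rv u = (real_of_int (fst u), real_of_int (snd u))"

definition primitive :: "lvec \<Rightarrow> bool" where
  "primitive u \<longleftrightarrow> u \<noteq> (0,0) \<and> gcd (fst u) (snd u) = 1"

definition cone_gen :: "lvec set \<Rightarrow> cone2" where
  "cone_gen S = {(\<Sum>v\<in>S. c v *\<^sub>R rv v) | c. \<forall>v\<in>S. c v \<ge> 0}"

definition scrp_cone :: "cone2 \<Rightarrow> bool" where
  "scrp_cone \<sigma> \<longleftrightarrow> (\<exists>S. finite S \<and> \<sigma> = cone_gen S) \<and> \<sigma> \<inter> uminus ` \<sigma> = {0}"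

definition is_fan :: "cone2 set \<Rightarrow> bool" where
  "is_fan \<Sigma> \<longleftrightarrow> finite \<Sigma> \<and> \<Sigma> \<noteq> {} \<and>
     (\<forall>\<sigma>\<in>\<Sigma>. scrp_cone \<sigma>) \<and>
     (\<forall>\<sigma>\<in>\<Sigma>. \<forall>\<tau>. \<tau> face_of \<sigma> \<and> \<tau> \<noteq> {} \<longrightarrow> \<tau> \<in> \<Sigma>) \<and>
     (\<forall>\<sigma>\<in>\<Sigma>. \<forall>\<tau>\<in>\<Sigma>. (\<sigma> \<inter> \<tau>) face_of \<sigma> \<and> (\<sigma> \<inter> \<tau>) face_of \<tau>)"

definition complete_fan :: "cone2 set \<Rightarrow> bool" where
  "complete_fan \<Sigma> \<longleftrightarrow> is_fan \<Sigma> \<and> \<Union>\<Sigma> = UNIV"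

definition cones_dim :: "cone2 set \<Rightarrow> int \<Rightarrow> cone2 set" where
  "cones_dim \<Sigma> k = {\<sigma>\<in>\<Sigma>. aff_dim \<sigma> = k}"

definition nonsingular :: "cone2 set \<Rightarrow> bool" where
  "nonsingular \<Sigma> \<longleftrightarrow> (\<forall>\<sigma>\<in>cones_dim \<Sigma> 2. \<exists>u v.
      \<bar>fst u * snd v - snd u * fst v\<bar> = 1 \<and> \<sigma> = cone_gen {u, v})"

definition in_closed_quadrant :: "cone2 \<Rightarrow> bool" where
  "in_closed_quadrant \<sigma> \<longleftrightarrow> (\<exists>s1 s2::real. s1 \<in> {1,-1} \<and> s2 \<in> {1,-1} \<and>
      \<sigma> \<subseteq> {x. s1 * fst x \<ge> 0 \<and> s2 * snd x \<ge> 0})"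

definition cFan_sc :: "cone2 set set" where
  "cFan_sc = {\<Sigma>. complete_fan \<Sigma> \<and> nonsingular \<Sigma> \<and>
      cone_gen {(1,0),(0,1)} \<in> \<Sigma> \<and>
      cone_gen {(-1,0),(0,-1)} \<in> \<Sigma> \<and>
      cone_gen {(-1,0),(0,1)} \<in> \<Sigma> \<and>
      (\<forall>\<sigma>\<in>\<Sigma>. in_closed_quadrant \<sigma>) \<and>
      (\<forall>\<rho>\<in>cones_dim \<Sigma> 1. card {\<sigma>\<in>cones_dim \<Sigma> 2. \<rho> face_of \<sigma>} = 2)}"

definition subdivision_step :: "cone2 set \<Rightarrow> cone2 set \<Rightarrow> bool" where
  "subdivision_step \<Sigma> \<Sigma>' \<longleftrightarrow> (\<exists>u v. primitive u \<and> primitive v \<and>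
      cone_gen {u, v} \<in> cones_dim \<Sigma> 2 \<and>
      \<Sigma>' = (\<Sigma> - {cone_gen {u, v}}) \<union>
            {cone_gen {u + v}, cone_gen {u, u + v}, cone_gen {v, u + v}})"

definition Sigma0000 :: "cone2 set" where
  "Sigma0000 = {cone_gen {},
     cone_gen {(1,0)}, cone_gen {(0,1)}, cone_gen {(-1,0)}, cone_gen {(0,-1)},
     cone_gen {(1,0),(0,1)}, cone_gen {(-1,0),(0,1)},
     cone_gen {(-1,0),(0,-1)}, cone_gen {(1,0),(0,-1)}}"

end

theory Submission
  imports Defs
begin


definition dt :: "real \<times> real \<Rightarrow> real \<times> real \<Rightarrow> real" where
  "dt p q = fst p * snd q - snd p * fst q"

definition C2 :: "real \<times> real \<Rightarrow> real \<times> real \<Rightarrow> (real \<times> real) set" where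
  "C2 a b = {p. 0 \<le> dt p b / dt a b \<and> 0 \<le> dt a p / dt a b}"

definition R1 :: "real \<times> real \<Rightarrow> (real \<times> real) set" where
  "R1 a = {c *\<^sub>R a | c. c \<ge> 0}"

lemma dt_simps:
  "dt (x + y) q = dt x q + dt y q" "dt p (x + y) = dt p x + dt p y"
  "dt (x - y) q = dt x q - dt y q" "dt p (x - y) = dt p x - dt p y"
  "dt (c *\<^sub>R x) q = c * dt x q" "dt p (c *\<^sub>R x) = c * dt p x"
  "dt p p = 0" "dt 0 q = 0" "dt q 0 = 0"
  by (auto simp: dt_def algebra_simps)

lemma dt_swap: "dt q p = - dt p q"
  by (simp add: dt_def)

lemma decomp:
  assumes "dt a b \<noteq> 0"
  shows "p = (dt p b / dt a b) *\<^sub>R a + (dt a p / dt a b) *\<^sub>R b"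
proof -
  obtain p1 p2 a1 a2 b1 b2 where e: "p = (p1,p2)" "a = (a1,a2)" "b = (b1,b2)" by (cases p, cases a, cases b) auto
  have d: "a1 * b2 - a2 * b1 \<noteq> 0" using assms e by (simp add: dt_def)
  have 1: "p1 = (p1 * b2 - p2 * b1) / (a1 * b2 - a2 * b1) * a1 + (a1 * p2 - a2 * p1) / (a1 * b2 - a2 * b1) * b1"
  proof -
    have "(p1 * b2 - p2 * b1) / (a1 * b2 - a2 * b1) * a1 + (a1 * p2 - a2 * p1) / (a1 * b2 - a2 * b1) * b1
       = ((p1 * b2 - p2 * b1) * a1 + (a1 * p2 - a2 * p1) * b1) / (a1 * b2 - a2 * b1)"
      by (simp add: add_divide_distrib)
    also have "(p1 * b2 - p2 * b1) * a1 + (a1 * p2 - a2 * p1) * b1 = p1 * (a1 * b2 - a2 * b1)"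
      by (simp add: algebra_simps)
    finally show ?thesis using d by simp
  qed
  have 2: "p2 = (p1 * b2 - p2 * b1) / (a1 * b2 - a2 * b1) * a2 + (a1 * p2 - a2 * p1) / (a1 * b2 - a2 * b1) * b2"
  proof -
    have "(p1 * b2 - p2 * b1) / (a1 * b2 - a2 * b1) * a2 + (a1 * p2 - a2 * p1) / (a1 * b2 - a2 * b1) * b2
       = ((p1 * b2 - p2 * b1) * a2 + (a1 * p2 - a2 * p1) * b2) / (a1 * b2 - a2 * b1)"
      by (simp add: add_divide_distrib)
    also have "(p1 * b2 - p2 * b1) * a2 + (a1 * p2 - a2 * p1) * b2 = p2 * (a1 * b2 - a2 * b1)"
      by (simp add: algebra_simps)
    finally show ?thesis using d by simp
  qed
  show ?thesis using 1 2 e by (simp add: dt_def)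
qed

lemma cone_gen_empty: "cone_gen {} = {0}"
  unfolding cone_gen_def by simp

lemma cone_gen_single: "cone_gen {w} = R1 (rv w)"
proof
  show "cone_gen {w} \<subseteq> R1 (rv w)"
  proof
    fix x assume "x \<in> cone_gen {w}"
    then obtain c where "x = c w *\<^sub>R rv w" "c w \<ge> 0" unfolding cone_gen_def by auto
    then show "x \<in> R1 (rv w)" unfolding R1_def by blast
  qed
  show "R1 (rv w) \<subseteq> cone_gen {w}"
  proof
    fix x assume "x \<in> R1 (rv w)"
    then obtain c where c: "x = c *\<^sub>R rv w" "c \<ge> 0" unfolding R1_def by auto
    show "x \<in> cone_gen {w}" unfolding cone_gen_def mem_Collect_eq
      by (rule exI[where x="\<lambda>_. c"]) (use c in simp)
  qed
qed

lemma cone_gen_pair: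
  assumes "u \<noteq> v"
  shows "cone_gen {u, v} = {\<alpha> *\<^sub>R rv u + \<beta> *\<^sub>R rv v | \<alpha> \<beta>. \<alpha> \<ge> 0 \<and> \<beta> \<ge> 0}"
proof
  show "cone_gen {u, v} \<subseteq> {\<alpha> *\<^sub>R rv u + \<beta> *\<^sub>R rv v | \<alpha> \<beta>. \<alpha> \<ge> 0 \<and> \<beta> \<ge> 0}"
  proof
    fix x assume "x \<in> cone_gen {u, v}"
    then obtain c where "x = (\<Sum>w\<in>{u,v}. c w *\<^sub>R rv w)" "\<forall>w\<in>{u,v}. c w \<ge> 0"
      unfolding cone_gen_def by blast
    then have "x = c u *\<^sub>R rv u + c v *\<^sub>R rv v" "c u \<ge> 0" "c v \<ge> 0" using assms by auto
    then show "x \<in> {\<alpha> *\<^sub>R rv u + \<beta> *\<^sub>R rv v | \<alpha> \<beta>. \<alpha> \<ge> 0 \<and> \<beta> \<ge> 0}" by blast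
  qed
  show "{\<alpha> *\<^sub>R rv u + \<beta> *\<^sub>R rv v | \<alpha> \<beta>. \<alpha> \<ge> 0 \<and> \<beta> \<ge> 0} \<subseteq> cone_gen {u, v}"
  proof
    fix x assume "x \<in> {\<alpha> *\<^sub>R rv u + \<beta> *\<^sub>R rv v | \<alpha> \<beta>. \<alpha> \<ge> 0 \<and> \<beta> \<ge> 0}"
    then obtain \<alpha> \<beta> where x: "x = \<alpha> *\<^sub>R rv u + \<beta> *\<^sub>R rv v" "\<alpha> \<ge> 0" "\<beta> \<ge> 0" by auto
    define c where "c = (\<lambda>w. if w = u then \<alpha> else \<beta>)"
    have "x = (\<Sum>w\<in>{u,v}. c w *\<^sub>R rv w)" using assms x by (simp add: c_def)
    moreover have "\<forall>w\<in>{u,v}. c w \<ge> 0" using x by (simp add: c_def)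
    ultimately show "x \<in> cone_gen {u, v}" unfolding cone_gen_def by blast
  qed
qed

lemma C2_alt:
  assumes "dt a b \<noteq> 0"
  shows "{\<alpha> *\<^sub>R a + \<beta> *\<^sub>R b | \<alpha> \<beta>. \<alpha> \<ge> 0 \<and> \<beta> \<ge> 0} = C2 a b"
proof
  show "{\<alpha> *\<^sub>R a + \<beta> *\<^sub>R b | \<alpha> \<beta>. \<alpha> \<ge> 0 \<and> \<beta> \<ge> 0} \<subseteq> C2 a b"
  proof
    fix p assume "p \<in> {\<alpha> *\<^sub>R a + \<beta> *\<^sub>R b | \<alpha> \<beta>. \<alpha> \<ge> 0 \<and> \<beta> \<ge> 0}"
    then obtain \<alpha> \<beta> where p: "p = \<alpha> *\<^sub>R a + \<beta> *\<^sub>R b" "\<alpha> \<ge> 0" "\<beta> \<ge> 0" by blast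
    have "dt p b / dt a b = \<alpha>" "dt a p / dt a b = \<beta>" using assms p(1) by (simp_all add: dt_simps)
    then show "p \<in> C2 a b" using p unfolding C2_def by simp
  qed
  show "C2 a b \<subseteq> {\<alpha> *\<^sub>R a + \<beta> *\<^sub>R b | \<alpha> \<beta>. \<alpha> \<ge> 0 \<and> \<beta> \<ge> 0}"
  proof
    fix p assume "p \<in> C2 a b"
    then have "0 \<le> dt p b / dt a b" "0 \<le> dt a p / dt a b" unfolding C2_def by auto
    with decomp[OF assms, of p]
    show "p \<in> {\<alpha> *\<^sub>R a + \<beta> *\<^sub>R b | \<alpha> \<beta>. \<alpha> \<ge> 0 \<and> \<beta> \<ge> 0}"
      by (intro CollectI exI[where x="dt p b / dt a b"] exI[where x="dt a p / dt a b"]) simp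
  qed
qed

lemma cone_gen_C2:
  assumes "dt (rv u) (rv v) \<noteq> 0"
  shows "cone_gen {u, v} = C2 (rv u) (rv v)"
proof -
  have "u \<noteq> v" using assms by (metis dt_simps(7))
  then show ?thesis using cone_gen_pair C2_alt[OF assms] by simp
qed


lemma C2_mem: "p \<in> C2 a b \<longleftrightarrow> 0 \<le> dt p b / dt a b \<and> 0 \<le> dt a p / dt a b"
  by (simp add: C2_def)

lemma R1_char_a:
  assumes "dt a b \<noteq> 0"
  shows "p \<in> R1 a \<longleftrightarrow> 0 \<le> dt p b / dt a b \<and> dt a p / dt a b = 0"
proof
  assume "p \<in> R1 a"
  then obtain c where "p = c *\<^sub>R a" "c \<ge> 0" unfolding R1_def by auto
  then show "0 \<le> dt p b / dt a b \<and> dt a p / dt a b = 0" using assms by (simp add: dt_simps)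
next
  assume h: "0 \<le> dt p b / dt a b \<and> dt a p / dt a b = 0"
  then have "p = (dt p b / dt a b) *\<^sub>R a" using decomp[OF assms, of p] assms by simp
  then show "p \<in> R1 a" using h unfolding R1_def by blast
qed

lemma R1_char_b:
  assumes "dt a b \<noteq> 0"
  shows "p \<in> R1 b \<longleftrightarrow> dt p b / dt a b = 0 \<and> 0 \<le> dt a p / dt a b"
proof
  assume "p \<in> R1 b"
  then obtain c where "p = c *\<^sub>R b" "c \<ge> 0" unfolding R1_def by auto
  then show "dt p b / dt a b = 0 \<and> 0 \<le> dt a p / dt a b" using assms by (simp add: dt_simps)
next
  assume h: "dt p b / dt a b = 0 \<and> 0 \<le> dt a p / dt a b"
  then have "p = (dt a p / dt a b) *\<^sub>R b" using decomp[OF assms, of p] assms by simp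
  then show "p \<in> R1 b" using h unfolding R1_def by blast
qed

lemma zero_char:
  assumes "dt a b \<noteq> 0"
  shows "p = 0 \<longleftrightarrow> dt p b / dt a b = 0 \<and> dt a p / dt a b = 0"
  using decomp[OF assms, of p] by (auto simp: dt_simps)

lemma face_step:
  assumes "T face_of S" "x \<in> T" "y \<in> S" "0 < t" "x + t *\<^sub>R (x - y) \<in> S"
  shows "y \<in> T"
proof (cases "y = x")
  case True then show ?thesis using assms by simp
next
  case False
  define z where "z = x + t *\<^sub>R (x - y)"
  define u where "u = 1 / (1 + t)"
  have u: "0 < u" "u < 1" "u + u * t = 1" using assms(4) by (auto simp: u_def field_simps)
  have "z - y = (1 + t) *\<^sub>R (x - y)" by (simp add: z_def algebra_simps)
  then have "y \<noteq> z" using False assms(4)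
    by (metis add_pos_pos eq_iff_diff_eq_0 scaleR_eq_0_iff zero_less_one order_less_irrefl)
  moreover have "(1 - u) *\<^sub>R y + u *\<^sub>R z = (1 - (u + u * t)) *\<^sub>R y + (u + u * t) *\<^sub>R x"
    by (simp add: z_def algebra_simps)
  then have "x = (1 - u) *\<^sub>R y + u *\<^sub>R z" using u by simp
  ultimately have "x \<in> open_segment y z" using u unfolding in_segment by blast
  then show ?thesis using face_ofD[OF assms(1) _ assms(3) _ assms(2)] assms(5) z_def by blast
qed


lemma aux_div:
  fixes m c :: real assumes "0 \<le> m" "0 \<le> c" shows "m / (1 + c) * c \<le> m"
proof -
  have p: "0 < 1 + c" using assms by simp
  have "m * c \<le> m * (1 + c)" using assms by (simp add: mult_left_mono)
  moreover have "m / (1 + c) * c = (m * c) / (1 + c)" by simp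
  ultimately show ?thesis using pos_divide_le_eq[OF p] by simp
qed

lemma aux_t:
  fixes m c t k :: real
  assumes "0 < m" "0 \<le> c" "0 < t" "t \<le> m / (1 + c)" "0 \<le> k"
  shows "0 \<le> m + t * (k - c)"
proof -
  have "t * c \<le> m / (1 + c) * c" using mult_right_mono[OF assms(4) assms(2)] .
  also have "\<dots> \<le> m" using aux_div assms by simp
  finally show ?thesis using assms by (simp add: algebra_simps) (smt (verit) mult_nonneg_nonneg)
qed

lemma faces_C2:
  assumes D: "dt a b \<noteq> 0" and F: "T face_of C2 a b"
  shows "T = {} \<or> T = {0} \<or> T = R1 a \<or> T = R1 b \<or> T = C2 a b"
proof -
  define A where "A p = dt p b / dt a b" for p
  define B where "B p = dt a p / dt a b" for p
  have C: "p \<in> C2 a b \<longleftrightarrow> 0 \<le> A p \<and> 0 \<le> B p" for p by (simp add: C2_mem A_def B_def)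
  have Ra: "p \<in> R1 a \<longleftrightarrow> 0 \<le> A p \<and> B p = 0" for p using R1_char_a[OF D] A_def B_def by simp
  have Rb: "p \<in> R1 b \<longleftrightarrow> A p = 0 \<and> 0 \<le> B p" for p using R1_char_b[OF D] A_def B_def by simp
  have Z: "p = 0 \<longleftrightarrow> A p = 0 \<and> B p = 0" for p using zero_char[OF D] A_def B_def by simp
  have linA: "A (x + t *\<^sub>R (x - y)) = A x + t * (A x - A y)" for x y t
    using D by (simp add: A_def dt_simps field_simps)
  have linB: "B (x + t *\<^sub>R (x - y)) = B x + t * (B x - B y)" for x y t
    using D by (simp add: B_def dt_simps field_simps)
  have midA: "A ((1/2) *\<^sub>R x + (1/2) *\<^sub>R y) = A x / 2 + A y / 2" for x y
    using D by (simp add: A_def dt_simps field_simps)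
  have midB: "B ((1/2) *\<^sub>R x + (1/2) *\<^sub>R y) = B x / 2 + B y / 2" for x y
    using D by (simp add: B_def dt_simps field_simps)
  have TC: "T \<subseteq> C2 a b" using F face_of_imp_subset by blast
  have cvx: "convex T" using F face_of_imp_convex by blast
  have mid: "(1/2) *\<^sub>R x + (1/2) *\<^sub>R y \<in> T" if "x \<in> T" "y \<in> T" for x y
    using convexD[OF cvx that, of "1/2" "1/2"] by simp
  have key: "y \<in> T" if "x \<in> T" "y \<in> C2 a b" "0 < t" "0 \<le> A x + t * (A x - A y)"
    "0 \<le> B x + t * (B x - B y)" for x y t
  proof -
    have "x + t *\<^sub>R (x - y) \<in> C2 a b" using that C linA linB by simp
    then show ?thesis using face_step[OF F that(1,2,3)] by blast
  qed
  consider (int) "\<exists>x\<in>T. A x > 0 \<and> B x > 0"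
    | (ra) "\<not>(\<exists>x\<in>T. A x > 0 \<and> B x > 0)" "\<exists>x\<in>T. A x > 0"
    | (rb) "\<not>(\<exists>x\<in>T. A x > 0)" "\<exists>x\<in>T. B x > 0"
    | (z) "\<forall>x\<in>T. A x \<le> 0 \<and> B x \<le> 0" by (meson not_less)
  then show ?thesis
  proof cases
    case int
    then obtain x where x: "x \<in> T" "A x > 0" "B x > 0" by blast
    have "C2 a b \<subseteq> T"
    proof
      fix y assume y: "y \<in> C2 a b"
      then have y0: "0 \<le> A y" "0 \<le> B y" using C by auto
      define t where "t = min (A x / (1 + A y)) (B x / (1 + B y))"
      have t0: "0 < t" using x y0 by (simp add: t_def)
      show "y \<in> T"
      proof (rule key[OF x(1) y t0])
        show "0 \<le> A x + t * (A x - A y)"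
          by (rule aux_t) (use x y0 t0 in \<open>auto simp: t_def\<close>)
        show "0 \<le> B x + t * (B x - B y)"
          by (rule aux_t) (use x y0 t0 in \<open>auto simp: t_def\<close>)
      qed
    qed
    then show ?thesis using TC by blast
  next
    case ra
    then obtain x where x: "x \<in> T" "A x > 0" by blast
    have Bz: "B z = 0" if "z \<in> T" for z
    proof (rule ccontr)
      assume "B z \<noteq> 0"
      moreover have "0 \<le> B z" using that TC C by blast
      ultimately have "B z > 0" by linarith
      moreover have "0 \<le> A z" "0 \<le> B x" using x TC C that by blast+
      ultimately have "A x / 2 + A z / 2 > 0" "B x / 2 + B z / 2 > 0" using x by linarith+
      then have "A ((1/2) *\<^sub>R x + (1/2) *\<^sub>R z) > 0 \<and> B ((1/2) *\<^sub>R x + (1/2) *\<^sub>R z) > 0"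
        using midA midB by simp
      then show False using ra(1) mid[OF x(1) that] by blast
    qed
    have "T \<subseteq> R1 a" using Bz TC C Ra by blast
    moreover have "R1 a \<subseteq> T"
    proof
      fix y assume y: "y \<in> R1 a"
      then have y0: "0 \<le> A y" "B y = 0" using Ra by auto
      then have yC: "y \<in> C2 a b" using C by simp
      define t where "t = A x / (1 + A y)"
      have t0: "0 < t" using x y0 by (simp add: t_def)
      show "y \<in> T"
      proof (rule key[OF x(1) yC t0])
        show "0 \<le> A x + t * (A x - A y)"
          by (rule aux_t) (use x y0 t0 in \<open>auto simp: t_def\<close>)
        show "0 \<le> B x + t * (B x - B y)" using Bz[OF x(1)] y0 by simp
      qed
    qed
    ultimately show ?thesis by blast
  next
    case rb
    then obtain x where x: "x \<in> T" "B x > 0" by blast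
    have Az: "A z = 0" if "z \<in> T" for z
    proof -
      have "0 \<le> A z" using that TC C by blast
      moreover have "\<not> A z > 0" using rb(1) that by blast
      ultimately show ?thesis by linarith
    qed
    have "T \<subseteq> R1 b" using Az TC C Rb by blast
    moreover have "R1 b \<subseteq> T"
    proof
      fix y assume y: "y \<in> R1 b"
      then have y0: "A y = 0" "0 \<le> B y" using Rb by auto
      then have yC: "y \<in> C2 a b" using C by simp
      define t where "t = B x / (1 + B y)"
      have t0: "0 < t" using x y0 by (simp add: t_def)
      show "y \<in> T"
      proof (rule key[OF x(1) yC t0])
        show "0 \<le> B x + t * (B x - B y)"
          by (rule aux_t) (use x y0 t0 in \<open>auto simp: t_def\<close>)
        show "0 \<le> A x + t * (A x - A y)" using Az[OF x(1)] y0 by simp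
      qed
    qed
    ultimately show ?thesis by blast
  next
    case z
    have "T \<subseteq> {0}"
    proof
      fix x assume "x \<in> T"
      then have "A x = 0" "B x = 0" using z TC C by (meson order_antisym subsetD)+
      then show "x \<in> {0}" using Z by simp
    qed
    then show ?thesis by blast
  qed
qed


lemma C2_swap: "C2 b a = C2 a b"
proof -
  have "dt p a / dt b a = dt a p / dt a b" "dt b p / dt b a = dt p b / dt a b" for p
    by (simp_all add: dt_swap[of p a] dt_swap[of b a] dt_swap[of b p])
  then show ?thesis unfolding C2_def by auto
qed

lemma lin_comb1:
  "dt ((1-u) *\<^sub>R y + u *\<^sub>R z) b / D = (1-u) * (dt y b / D) + u * (dt z b / D)"
  by (simp_all add: dt_simps add_divide_distrib)
lemma lin_comb2:
  "dt a ((1-u) *\<^sub>R y + u *\<^sub>R z) / D = (1-u) * (dt a y / D) + u * (dt a z / D)"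
  by (simp_all add: dt_simps add_divide_distrib)

lemma sum0_split:
  fixes u p q :: real
  assumes "0 < u" "u < 1" "0 \<le> p" "0 \<le> q" "(1-u) * p + u * q = 0"
  shows "p = 0 \<and> q = 0"
proof -
  have "0 \<le> (1-u) * p" "0 \<le> u * q" using assms by simp_all
  then have "(1-u) * p = 0" "u * q = 0" using assms(5) by linarith+
  then show ?thesis using assms(1,2) by simp
qed

lemma R1a_face:
  assumes D: "dt a b \<noteq> 0"
  shows "R1 a face_of C2 a b"
  unfolding face_of_def
proof (intro conjI ballI impI)
  show "R1 a \<subseteq> C2 a b"
  proof
    fix p assume p: "p \<in> R1 a"
    then have "dt a p / dt a b = 0" "0 \<le> dt p b / dt a b" using R1_char_a[OF D, of p] by blast+
    then have "0 \<le> dt a p / dt a b" "0 \<le> dt p b / dt a b" by linarith+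
    then show "p \<in> C2 a b" using C2_mem[of p a b] by blast
  qed
  show "convex (R1 a)"
    unfolding convex_def
  proof (intro ballI allI impI)
    fix x y u v assume xy: "x \<in> R1 a" "y \<in> R1 a" and uv: "0 \<le> (u::real)" "0 \<le> v" "u + v = 1"
    then have "0 \<le> dt x b / dt a b" "dt a x / dt a b = 0" "0 \<le> dt y b / dt a b" "dt a y / dt a b = 0"
      using R1_char_a[OF D] by auto
    moreover have "dt (u *\<^sub>R x + v *\<^sub>R y) b / dt a b = u * (dt x b / dt a b) + v * (dt y b / dt a b)"
      by (simp add: dt_simps add_divide_distrib)
    moreover have "dt a (u *\<^sub>R x + v *\<^sub>R y) = u * dt a x + v * dt a y"
      by (simp add: dt_simps)
    moreover have "0 \<le> u * (dt x b / dt a b) + v * (dt y b / dt a b)"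
      using uv calculation by (intro add_nonneg_nonneg mult_nonneg_nonneg) auto
    ultimately have "0 \<le> dt (u *\<^sub>R x + v *\<^sub>R y) b / dt a b" "dt a (u *\<^sub>R x + v *\<^sub>R y) / dt a b = 0"
      using D by auto
    then show "u *\<^sub>R x + v *\<^sub>R y \<in> R1 a" using R1_char_a[OF D] by blast
  qed
  fix y z x assume yz: "y \<in> C2 a b" "z \<in> C2 a b" and x: "x \<in> R1 a" "x \<in> open_segment y z"
  then obtain u where u: "0 < u" "u < 1" "x = (1 - u) *\<^sub>R y + u *\<^sub>R z" unfolding in_segment by blast
  have "dt a x / dt a b = 0" using x R1_char_a[OF D] by blast
  then have "(1-u) * (dt a y / dt a b) + u * (dt a z / dt a b) = 0" using u lin_comb2 by simp
  then have "dt a y / dt a b = 0 \<and> dt a z / dt a b = 0"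
    using sum0_split[OF u(1,2)] yz C2_mem by blast
  then show "y \<in> R1 a" "z \<in> R1 a" using yz C2_mem R1_char_a[OF D] by auto
qed

lemma R1b_face:
  assumes D: "dt a b \<noteq> 0"
  shows "R1 b face_of C2 a b"
proof -
  have "dt b a \<noteq> 0" using D dt_swap[of b a] by simp
  then show ?thesis using R1a_face C2_swap by metis
qed

lemma zero_face:
  assumes D: "dt a b \<noteq> 0"
  shows "{0} face_of C2 a b"
  unfolding face_of_def
proof (intro conjI ballI impI)
  show "{0} \<subseteq> C2 a b" by (simp add: C2_mem dt_simps)
  show "convex {0::real\<times>real}" by simp
  fix y z x assume yz: "y \<in> C2 a b" "z \<in> C2 a b" and x: "x \<in> {0}" "x \<in> open_segment y z"
  then obtain u where u: "0 < u" "u < 1" "x = (1 - u) *\<^sub>R y + u *\<^sub>R z" unfolding in_segment by blast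
  have "x = 0" using x by simp
  then have "(1-u) * (dt a y / dt a b) + u * (dt a z / dt a b) = 0"
            "(1-u) * (dt y b / dt a b) + u * (dt z b / dt a b) = 0"
    using u lin_comb1[where u=u and y=y and z=z and b=b and D="dt a b"]
      lin_comb2[where u=u and y=y and z=z and a=a and D="dt a b"] by (simp_all add: dt_simps)
  then have "dt a y / dt a b = 0 \<and> dt a z / dt a b = 0" "dt y b / dt a b = 0 \<and> dt z b / dt a b = 0"
    using sum0_split[OF u(1,2)] yz C2_mem by blast+
  then show "y \<in> {0}" "z \<in> {0}" using zero_char[OF D] by auto
qed

lemma aff_dim_C2:
  assumes D: "dt a b \<noteq> 0"
  shows "aff_dim (C2 a b) = 2"
proof -
  define Op where "Op = {p. 0 < dt p b * dt a b \<and> 0 < dt a p * dt a b}"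
  have "open Op" unfolding Op_def dt_def
    by (intro open_Collect_conj open_Collect_less continuous_on_mult continuous_on_diff
        continuous_on_const continuous_on_fst continuous_on_snd continuous_on_id)
  moreover have "Op \<subseteq> C2 a b" unfolding Op_def C2_def
    by (auto simp: zero_less_mult_iff zero_le_divide_iff)
  ultimately have "Op \<subseteq> interior (C2 a b)" by (meson interior_maximal)
  moreover have "a + b \<in> Op" using D unfolding Op_def by (auto simp: dt_simps dt_swap[of b a] zero_less_mult_iff)
  ultimately have "interior (C2 a b) \<noteq> {}" by blast
  then show ?thesis using aff_dim_nonempty_interior[of "C2 a b"] by simp
qed




definition Q4r :: "(real \<times> real) set" where "Q4r = {p. fst p \<ge> 0 \<and> snd p \<le> 0}"
definition gk :: "real \<times> real \<Rightarrow> real" where "gk p = - snd p / (fst p - snd p)"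
definition idet :: "lvec \<Rightarrow> lvec \<Rightarrow> int" where "idet x y = fst x * snd y - snd x * fst y"
definition inQ4 :: "lvec \<Rightarrow> bool" where "inQ4 w \<longleftrightarrow> fst w \<ge> 0 \<and> snd w \<le> 0"

lemma rv_add: "rv (u + v) = rv u + rv v"
  by (simp add: rv_def)
lemma dt_rv: "dt (rv x) (rv y) = of_int (idet x y)"
  by (simp add: rv_def dt_def idet_def)
lemma rv_eq_iff: "rv u = rv v \<longleftrightarrow> u = v"
  by (cases u, cases v) (simp add: rv_def)
lemma rv_zero_iff: "rv u = 0 \<longleftrightarrow> u = 0"
  by (cases u) (simp add: rv_def zero_prod_def)
lemma rv_Q4: "rv w \<in> Q4r \<longleftrightarrow> inQ4 w"
  by (simp add: rv_def Q4r_def inQ4_def)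

lemma Q4_den: "p \<in> Q4r \<Longrightarrow> p \<noteq> 0 \<Longrightarrow> fst p - snd p > 0"
  by (cases p) (auto simp: Q4r_def zero_prod_def)

lemma gk_diff:
  assumes "p \<in> Q4r" "p \<noteq> 0" "q \<in> Q4r" "q \<noteq> 0"
  shows "gk p - gk q = dt p q / ((fst p - snd p) * (fst q - snd q))"
proof -
  have a: "fst p - snd p > 0" "fst q - snd q > 0" using Q4_den assms by auto
  then show ?thesis unfolding gk_def dt_def by (simp add: field_simps)
qed

lemma gk_less:
  assumes "p \<in> Q4r" "p \<noteq> 0" "q \<in> Q4r" "q \<noteq> 0"
  shows "gk p < gk q \<longleftrightarrow> dt p q < 0"
proof -
  have a: "(fst p - snd p) * (fst q - snd q) > 0" using Q4_den assms by auto
  have "gk p < gk q \<longleftrightarrow> gk p - gk q < 0" by simp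
  also have "\<dots> \<longleftrightarrow> dt p q < 0" using gk_diff[OF assms] a by (simp add: divide_less_0_iff)
  finally show ?thesis .
qed

lemma gk_le:
  assumes "p \<in> Q4r" "p \<noteq> 0" "q \<in> Q4r" "q \<noteq> 0"
  shows "gk p \<le> gk q \<longleftrightarrow> dt p q \<le> 0"
proof -
  have a: "(fst p - snd p) * (fst q - snd q) > 0" using Q4_den assms by auto
  have "gk p \<le> gk q \<longleftrightarrow> gk p - gk q \<le> 0" by simp
  also have "\<dots> \<longleftrightarrow> dt p q \<le> 0" using gk_diff[OF assms] a by (simp add: divide_le_0_iff)
  finally show ?thesis .
qed

lemma gk_eq:
  assumes "p \<in> Q4r" "p \<noteq> 0" "q \<in> Q4r" "q \<noteq> 0"
  shows "gk p = gk q \<longleftrightarrow> dt p q = 0"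
  using gk_le[OF assms] gk_le[OF assms(3,4,1,2)] dt_swap[of p q] by linarith

lemma gk_scale: "0 < c \<Longrightarrow> gk (c *\<^sub>R p) = gk p"
proof -
  assume c: "0 < c"
  have "- (c * snd p) / (c * fst p - c * snd p) = - snd p / (fst p - snd p)"
  proof (cases "fst p - snd p = 0")
    case True
    then have "c * fst p - c * snd p = 0" by (simp add: right_diff_distrib[symmetric])
    then show ?thesis using True by simp
  next
    case False
    then have "c * fst p - c * snd p \<noteq> 0" using c by (simp add: right_diff_distrib[symmetric])
    then show ?thesis using False c by (simp add: field_simps)
  qed
  then show ?thesis by (simp add: gk_def)
qed

lemma gk_range:
  assumes "p \<in> Q4r" "p \<noteq> 0"
  shows "0 \<le> gk p" "gk p \<le> 1" "gk p = 0 \<longleftrightarrow> snd p = 0" "gk p = 1 \<longleftrightarrow> fst p = 0"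
proof -
  have d: "fst p - snd p > 0" using Q4_den assms by auto
  have s: "fst p \<ge> 0" "snd p \<le> 0" using assms by (auto simp: Q4r_def)
  show "0 \<le> gk p" using d s divide_nonpos_pos[of "snd p" "fst p - snd p"] by (simp add: gk_def)
  show "gk p \<le> 1" unfolding gk_def using s by (subst pos_divide_le_eq[OF d]) simp
  show "gk p = 0 \<longleftrightarrow> snd p = 0" using d by (simp add: gk_def)
  show "gk p = 1 \<longleftrightarrow> fst p = 0" using d by (auto simp: gk_def divide_eq_eq)
qed

lemma gk_eq_mult:
  assumes "p \<in> Q4r" "p \<noteq> 0" "q \<in> Q4r" "q \<noteq> 0" "gk p = gk q"
  shows "\<exists>c>0. p = c *\<^sub>R q"
proof -
  define dp where "dp = fst p - snd p"
  define dq where "dq = fst q - snd q"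
  have d: "dp > 0" "dq > 0" using Q4_den assms by (auto simp: dp_def dq_def)
  have e: "snd p * dq = snd q * dp" using assms(5) d unfolding gk_def dp_def dq_def
    by (simp add: field_simps)
  have "p = (dp / dq) *\<^sub>R q"
  proof (cases p, cases q)
    fix p1 p2 q1 q2 assume pq: "p = (p1, p2)" "q = (q1, q2)"
    have "p2 = dp / dq * q2" using e d pq by (simp add: field_simps)
    moreover have "p1 = dp / dq * q1"
    proof -
      have "p1 = dp + p2" using pq by (simp add: dp_def)
      also have "\<dots> = dp / dq * (dq + q2)" using \<open>p2 = dp / dq * q2\<close> d by (simp add: field_simps)
      also have "dq + q2 = q1" using pq by (simp add: dq_def)
      finally show ?thesis .
    qed
    ultimately show ?thesis using pq by simp
  qed
  then show ?thesis using d by (intro exI[of _ "dp / dq"]) simp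
qed

lemma primitive_unique:
  assumes "primitive u" "primitive v" "rv u = c *\<^sub>R rv v" "c > 0"
  shows "u = v"
proof -
  obtain u1 u2 v1 v2 where uv: "u = (u1, u2)" "v = (v1, v2)" by (cases u, cases v) auto
  have e1: "real_of_int u1 = c * real_of_int v1" "real_of_int u2 = c * real_of_int v2"
    using assms(3) uv by (simp_all add: rv_def)
  obtain s t where st: "s * v1 + t * v2 = 1" using bezout_int[of v1 v2] assms(2) uv
    by (auto simp: primitive_def)
  obtain s' t' where st': "s' * u1 + t' * u2 = 1" using bezout_int[of u1 u2] assms(1) uv
    by (auto simp: primitive_def)
  have "c = c * (of_int s * of_int v1 + of_int t * of_int v2)"
    using arg_cong[OF st, of real_of_int] by simp
  also have "\<dots> = of_int (s * u1 + t * u2)" using e1 by (simp add: algebra_simps)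
  finally have ck: "c = of_int (s * u1 + t * u2)" .
  have "1 = of_int s' * of_int u1 + of_int t' * (of_int u2 :: real)"
    using arg_cong[OF st', of real_of_int] by simp
  also have "\<dots> = c * of_int (s' * v1 + t' * v2)" using e1 by (simp add: algebra_simps)
  finally have "(1::real) = of_int ((s * u1 + t * u2) * (s' * v1 + t' * v2))" using ck by simp
  then have prod1: "(s * u1 + t * u2) * (s' * v1 + t' * v2) = 1" by linarith
  have "s * u1 + t * u2 > 0" using ck assms(4) by linarith
  then have "s * u1 + t * u2 = 1" using prod1 pos_zmult_eq_1_iff by blast
  then have "c = 1" using ck by simp
  then show ?thesis using assms(3) rv_eq_iff by simp
qed


lemma primitive_nz: "primitive u \<Longrightarrow> rv u \<noteq> 0"
  by (cases u) (auto simp: primitive_def rv_def zero_prod_def)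

lemma gi_inj:
  assumes "inQ4 x" "inQ4 y" "primitive x" "primitive y" "gk (rv x) = gk (rv y)"
  shows "x = y"
proof -
  have "rv x \<in> Q4r" "rv y \<in> Q4r" using assms rv_Q4 by auto
  then obtain c where "c > 0" "rv x = c *\<^sub>R rv y"
    using gk_eq_mult assms primitive_nz by blast
  then show ?thesis using primitive_unique assms by blast
qed

lemma prim_of_det:
  assumes "\<bar>idet a b\<bar> = 1"
  shows "primitive a" "primitive b"
proof -
  have "gcd (fst a) (snd a) dvd idet a b" unfolding idet_def
    by (intro dvd_diff dvd_mult2) auto
  then have "gcd (fst a) (snd a) dvd 1" using assms by (metis dvd_abs_iff)
  moreover have "a \<noteq> (0,0)" using assms by (auto simp: idet_def)
  ultimately show "primitive a" unfolding primitive_def by (simp add: zdvd1_eq)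
  have "gcd (fst b) (snd b) dvd idet a b" unfolding idet_def
    by (intro dvd_diff dvd_mult) auto
  then have "gcd (fst b) (snd b) dvd 1" using assms by (metis dvd_abs_iff)
  moreover have "b \<noteq> (0,0)" using assms by (auto simp: idet_def)
  ultimately show "primitive b" unfolding primitive_def by (simp add: zdvd1_eq)
qed

lemma C2_Q4_mem:
  assumes x: "x \<in> Q4r" "x \<noteq> 0" and y: "y \<in> Q4r" "y \<noteq> 0" and xy: "gk x < gk y"
  shows "p \<in> C2 x y \<longleftrightarrow> p = 0 \<or> (p \<in> Q4r \<and> gk x \<le> gk p \<and> gk p \<le> gk y)"
proof -
  have D: "dt x y < 0" using gk_less[OF x y] xy by simp
  show ?thesis
  proof
    assume p: "p \<in> C2 x y"
    then have r: "0 \<le> dt p y / dt x y" "0 \<le> dt x p / dt x y" by (auto simp: C2_mem)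
    then have n: "dt p y \<le> 0" "dt x p \<le> 0" using D by (auto simp: zero_le_divide_iff)
    have "p \<in> Q4r"
    proof -
      obtain \<alpha> \<beta> where e: "p = \<alpha> *\<^sub>R x + \<beta> *\<^sub>R y" "0 \<le> \<alpha>" "0 \<le> \<beta>"
        using decomp[of x y p] D r by force
      have "fst p = \<alpha> * fst x + \<beta> * fst y" "snd p = \<alpha> * snd x + \<beta> * snd y"
        using e by simp_all
      moreover have "0 \<le> \<alpha> * fst x" "0 \<le> \<beta> * fst y" "\<alpha> * snd x \<le> 0" "\<beta> * snd y \<le> 0"
        using e x y by (auto simp: Q4r_def mult_nonneg_nonpos)
      ultimately show ?thesis unfolding Q4r_def by simp
    qed
    then show "p = 0 \<or> (p \<in> Q4r \<and> gk x \<le> gk p \<and> gk p \<le> gk y)"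
      using gk_le[OF x \<open>p \<in> Q4r\<close>] gk_le[OF \<open>p \<in> Q4r\<close> _ y] n by blast
  next
    assume "p = 0 \<or> (p \<in> Q4r \<and> gk x \<le> gk p \<and> gk p \<le> gk y)"
    then show "p \<in> C2 x y"
    proof
      assume "p = 0" then show ?thesis by (simp add: C2_mem dt_simps)
    next
      assume h: "p \<in> Q4r \<and> gk x \<le> gk p \<and> gk p \<le> gk y"
      show ?thesis
      proof (cases "p = 0")
        case True then show ?thesis by (simp add: C2_mem dt_simps)
      next
        case False
        then have "dt x p \<le> 0" "dt p y \<le> 0" using gk_le[OF x] gk_le[OF _ _ y] h by blast+
        then show ?thesis using D by (simp add: C2_mem zero_le_divide_iff)
      qed
    qed
  qed
qed

lemma R1_zero: "0 \<in> R1 a" unfolding R1_def by force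
lemma R1_self: "a \<in> R1 a" unfolding R1_def by (rule CollectI, rule exI[of _ 1]) simp
lemma R1_scale: assumes "p \<in> R1 a" "0 \<le> c" shows "c *\<^sub>R p \<in> R1 a"
proof -
  obtain d where d: "p = d *\<^sub>R a" "d \<ge> 0" using assms(1) unfolding R1_def by auto
  then have "c *\<^sub>R p = (c * d) *\<^sub>R a" "c * d \<ge> 0" using assms(2) by simp_all
  then show ?thesis unfolding R1_def by blast
qed

lemma R1_gk:
  assumes "a \<in> Q4r" "a \<noteq> 0" "p \<in> R1 a" "p \<noteq> 0"
  shows "p \<in> Q4r" "gk p = gk a"
proof -
  obtain c where c: "p = c *\<^sub>R a" "c \<ge> 0" using assms(3) unfolding R1_def by auto
  then have "c > 0" using assms(4) by (cases "c = 0") auto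
  then show "p \<in> Q4r" using c assms(1) by (auto simp: Q4r_def mult_nonneg_nonpos)
  show "gk p = gk a" using c \<open>c > 0\<close> gk_scale by simp
qed

lemma R1_eq:
  assumes "p \<in> R1 a" "p \<in> R1 e" "p \<noteq> 0"
  shows "R1 a = R1 e"
proof -
  obtain c where c: "p = c *\<^sub>R a" "c \<ge> 0" using assms(1) unfolding R1_def by auto
  obtain d where d: "p = d *\<^sub>R e" "d \<ge> 0" using assms(2) unfolding R1_def by auto
  have "c > 0" "d > 0" using c d assms(3) by (cases "c = 0"; cases "d = 0"; auto)+
  have ae: "a = (d / c) *\<^sub>R e" using c d \<open>c > 0\<close> by (metis scaleR_scaleR divide_inverse_commute
      inverse_eq_divide order_less_irrefl scaleR_one right_inverse mult.commute)
  have ea: "e = (c / d) *\<^sub>R a" using c d \<open>d > 0\<close> by (metis scaleR_scaleR divide_inverse_commute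
      inverse_eq_divide order_less_irrefl scaleR_one right_inverse mult.commute)
  show ?thesis
  proof
    show "R1 a \<subseteq> R1 e"
    proof
      fix q assume "q \<in> R1 a"
      then obtain k where k: "q = k *\<^sub>R a" "k \<ge> 0" unfolding R1_def by auto
      then have "q = (k * (d / c)) *\<^sub>R e" "k * (d / c) \<ge> 0" using ae \<open>c > 0\<close> \<open>d > 0\<close> by simp_all
      then show "q \<in> R1 e" unfolding R1_def by blast
    qed
    show "R1 e \<subseteq> R1 a"
    proof
      fix q assume "q \<in> R1 e"
      then obtain k where k: "q = k *\<^sub>R e" "k \<ge> 0" unfolding R1_def by auto
      then have "q = (k * (c / d)) *\<^sub>R a" "k * (c / d) \<ge> 0" using ea \<open>c > 0\<close> \<open>d > 0\<close> by simp_all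
      then show "q \<in> R1 a" unfolding R1_def by blast
    qed
  qed
qed




definition gi :: "lvec \<Rightarrow> real" where "gi w = gk (rv w)"

definition consec :: "lvec set \<Rightarrow> lvec \<Rightarrow> lvec \<Rightarrow> bool" where
  "consec R x y \<longleftrightarrow> x \<in> R \<and> y \<in> R \<and> gi x < gi y \<and> \<not> (\<exists>z\<in>R. gi x < gi z \<and> gi z < gi y)"

definition chain :: "lvec set \<Rightarrow> bool" where
  "chain R \<longleftrightarrow> finite R \<and> (\<forall>w\<in>R. inQ4 w \<and> primitive w) \<and> (1,0) \<in> R \<and> (0,-1) \<in> R \<and>
     (\<forall>x y. consec R x y \<longrightarrow> idet x y = -1)"

definition fix6 :: "cone2 set" where
  "fix6 = {cone_gen {}, cone_gen {(0,1)}, cone_gen {(-1,0)}, cone_gen {(1,0),(0,1)},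
           cone_gen {(-1,0),(0,1)}, cone_gen {(-1,0),(0,-1)}}"

definition fan_of :: "lvec set \<Rightarrow> cone2 set" where
  "fan_of R = fix6 \<union> (\<lambda>w. cone_gen {w}) ` R \<union> {cone_gen {x, y} | x y. consec R x y}"

lemma good_pt: "inQ4 w \<Longrightarrow> primitive w \<Longrightarrow> rv w \<in> Q4r \<and> rv w \<noteq> 0"
  using rv_Q4 primitive_nz by blast

lemma gi_10: "gi (1,0) = 0" by (simp add: gi_def gk_def rv_def)
lemma gi_0m1: "gi (0,-1) = 1" by (simp add: gi_def gk_def rv_def)
lemma prim_10: "primitive (1,0)" "inQ4 (1,0)" by (simp_all add: primitive_def inQ4_def)
lemma prim_0m1: "primitive (0,-1)" "inQ4 (0,-1)" by (simp_all add: primitive_def inQ4_def)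

lemma gi_less_iff:
  assumes "inQ4 x" "primitive x" "inQ4 y" "primitive y"
  shows "gi x < gi y \<longleftrightarrow> idet x y < 0"
  using gk_less[of "rv x" "rv y"] good_pt[OF assms(1,2)] good_pt[OF assms(3,4)]
  by (simp add: gi_def dt_rv)

lemma gi_range:
  assumes "inQ4 x" "primitive x"
  shows "0 \<le> gi x" "gi x \<le> 1"
  using gk_range good_pt[OF assms] by (simp_all add: gi_def)

lemma chain_pt: "chain R \<Longrightarrow> w \<in> R \<Longrightarrow> inQ4 w \<and> primitive w"
  by (simp add: chain_def)

lemma chain_inj: "chain R \<Longrightarrow> x \<in> R \<Longrightarrow> y \<in> R \<Longrightarrow> gi x = gi y \<Longrightarrow> x = y"
  using gi_inj chain_pt unfolding gi_def by blast

lemma ex_argmax: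
  fixes f :: "'a \<Rightarrow> real"
  assumes "finite S" "S \<noteq> {}"
  shows "\<exists>x\<in>S. \<forall>y\<in>S. f y \<le> f x"
proof -
  have "Max (f ` S) \<in> f ` S" using assms by simp
  then obtain x where "x \<in> S" "f x = Max (f ` S)" by auto
  then show ?thesis using assms by (metis Max_ge finite_imageI imageI)
qed

lemma ex_argmin:
  fixes f :: "'a \<Rightarrow> real"
  assumes "finite S" "S \<noteq> {}"
  shows "\<exists>x\<in>S. \<forall>y\<in>S. f x \<le> f y"
proof -
  have "Min (f ` S) \<in> f ` S" using assms by simp
  then obtain x where "x \<in> S" "f x = Min (f ` S)" by auto
  then show ?thesis using assms by (metis Min_le finite_imageI imageI)
qed

lemma consec_right_unique:
  assumes "chain R" "consec R x y" "consec R x y'"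
  shows "y = y'"
proof -
  have "gi y = gi y'" using assms(2,3) unfolding consec_def by (meson linorder_neqE_linordered_idom)
  then show ?thesis using chain_inj[OF assms(1)] assms(2,3) unfolding consec_def by blast
qed

lemma consec_left_unique:
  assumes "chain R" "consec R x y" "consec R x' y"
  shows "x = x'"
proof -
  have "gi x = gi x'" using assms(2,3) unfolding consec_def by (meson linorder_neqE_linordered_idom)
  then show ?thesis using chain_inj[OF assms(1)] assms(2,3) unfolding consec_def by blast
qed

lemma consec_remove:
  assumes ch: "chain R" and uw: "consec R u w" and wv: "consec R w v"
  shows "consec (R - {w}) x y \<longleftrightarrow> (consec R x y \<and> x \<noteq> w \<and> y \<noteq> w) \<or> (x = u \<and> y = v)"
proof
  assume c: "consec (R - {w}) x y"
  show "(consec R x y \<and> x \<noteq> w \<and> y \<noteq> w) \<or> (x = u \<and> y = v)"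
  proof (cases "\<exists>z\<in>R. gi x < gi z \<and> gi z < gi y")
    case False
    then show ?thesis using c unfolding consec_def by blast
  next
    case True
    then obtain z where z: "z \<in> R" "gi x < gi z" "gi z < gi y" by blast
    then have "z = w" using c unfolding consec_def by blast
    then have xw: "gi x < gi w" "gi w < gi y" using z by auto
    have xR: "x \<in> R" "x \<noteq> w" "y \<in> R" "y \<noteq> w" using c unfolding consec_def by auto
    have "gi x \<le> gi u" using uw xR xw unfolding consec_def by (meson not_le)
    moreover have "\<not> gi x < gi u"
    proof
      assume "gi x < gi u"
      moreover have "gi u < gi y" using uw xw unfolding consec_def by auto
      moreover have "u \<in> R - {w}" using uw unfolding consec_def by auto
      ultimately show False using c unfolding consec_def by blast
    qed
    ultimately have "gi x = gi u" by simp
    then have "x = u" using chain_inj[OF ch] xR uw unfolding consec_def by metis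
    have "gi v \<le> gi y" using wv xR xw unfolding consec_def by (meson not_le)
    moreover have "\<not> gi v < gi y"
    proof
      assume "gi v < gi y"
      moreover have "gi x < gi v" using wv xw unfolding consec_def by auto
      moreover have "v \<in> R - {w}" using wv unfolding consec_def by auto
      ultimately show False using c unfolding consec_def by blast
    qed
    ultimately have "gi y = gi v" by simp
    then have "y = v" using chain_inj[OF ch] xR wv unfolding consec_def by metis
    then show ?thesis using \<open>x = u\<close> by blast
  qed
next
  assume h: "(consec R x y \<and> x \<noteq> w \<and> y \<noteq> w) \<or> (x = u \<and> y = v)"
  then show "consec (R - {w}) x y"
  proof
    assume "consec R x y \<and> x \<noteq> w \<and> y \<noteq> w"
    then show ?thesis unfolding consec_def by blast
  next
    assume xy: "x = u \<and> y = v"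
    have "u \<in> R - {w}" "v \<in> R - {w}" "gi u < gi v" using uw wv unfolding consec_def by auto
    moreover have "\<not> (\<exists>z\<in>R - {w}. gi u < gi z \<and> gi z < gi v)"
    proof
      assume "\<exists>z\<in>R - {w}. gi u < gi z \<and> gi z < gi v"
      then obtain z where z: "z \<in> R" "z \<noteq> w" "gi u < gi z" "gi z < gi v" by blast
      have "gi z \<noteq> gi w" using chain_inj[OF ch] z uw unfolding consec_def by metis
      then have "gi z < gi w \<or> gi w < gi z" by linarith
      then show False using z uw wv unfolding consec_def by blast
    qed
    ultimately show ?thesis using xy unfolding consec_def by blast
  qed
qed

lemma Sigma0000_eq: "Sigma0000 = fan_of {(1,0),(0,-1)}"
proof -
  have "consec {(1,0),(0,-1)} x y \<longleftrightarrow> x = (1,0) \<and> y = (0,-1)" for x y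
    unfolding consec_def using gi_10 gi_0m1 by auto
  then have "{cone_gen {x, y} | x y. consec {(1,0),(0,-1)} x y} = {cone_gen {(1,0),(0,-1)}}"
    by auto
  then show ?thesis unfolding fan_of_def fix6_def Sigma0000_def by auto
qed




lemma chain_det: "chain R \<Longrightarrow> consec R x y \<Longrightarrow> idet x y = -1"
  unfolding chain_def by blast

lemma blowdown:
  assumes ch: "chain R" and c3: "card R \<ge> 3"
  shows "\<exists>u w v. consec R u w \<and> consec R w v \<and> w = u + v"
proof -
  define f where "f w = fst w - snd w" for w :: lvec
  have fin: "finite R" using ch by (simp add: chain_def)
  have pt: "inQ4 w \<and> primitive w" if "w \<in> R" for w using chain_pt[OF ch that] .
  have f1: "f w \<ge> 1" if "w \<in> R" for w
  proof -
    have "inQ4 w" "w \<noteq> (0,0)" using pt[OF that] by (auto simp: primitive_def)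
    then show ?thesis unfolding f_def inQ4_def by (cases w) auto
  qed
  define M where "M = Max (f ` R)"
  have Rne: "R \<noteq> {}" using ch by (auto simp: chain_def)
  have fM: "f w \<le> M" if "w \<in> R" for w using fin that unfolding M_def by simp
  have M2: "M \<ge> 2"
  proof (rule ccontr)
    assume "\<not> M \<ge> 2"
    then have fa: "f w = 1" if "w \<in> R" for w using f1[OF that] fM[OF that] by simp
    have "w \<in> {(1,0),(0,-1)}" if "w \<in> R" for w
    proof -
      have "fst w - snd w = 1" "fst w \<ge> 0" "snd w \<le> 0" using fa[OF that] pt[OF that]
        by (auto simp: f_def inQ4_def)
      then have "(fst w = 1 \<and> snd w = 0) \<or> (fst w = 0 \<and> snd w = -1)" by linarith
      then show ?thesis by (cases w) auto
    qed
    then have "R \<subseteq> {(1,0),(0,-1)}" by blast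
    then have "card R \<le> card {(1::int,0::int),(0,-1)}" by (intro card_mono) auto
    then show False using c3 by simp
  qed
  have "M \<in> f ` R" unfolding M_def using fin Rne by simp
  define S where "S = {w\<in>R. f w = M}"
  have Sne: "S \<noteq> {}" "finite S" using \<open>M \<in> f ` R\<close> fin unfolding S_def by auto
  obtain w where wS: "w \<in> S" and wmin: "\<forall>y\<in>S. gi w \<le> gi y" using ex_argmin[OF Sne(2,1), of gi] by blast
  have wR: "w \<in> R" "f w = M" using wS unfolding S_def by auto
  have w10: "w \<noteq> (1,0)" "w \<noteq> (0,-1)" using wR M2 unfolding f_def by auto
  have r10: "(1,0) \<in> R" "(0,-1) \<in> R" using ch by (auto simp: chain_def)
  have gw: "0 < gi w" "gi w < 1"
  proof -
    have "0 \<le> gi w" "gi w \<le> 1" using gi_range pt[OF wR(1)] by auto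
    moreover have "gi w \<noteq> 0" using chain_inj[OF ch wR(1) r10(1)] gi_10 w10 by auto
    moreover have "gi w \<noteq> 1" using chain_inj[OF ch wR(1) r10(2)] gi_0m1 w10 by auto
    ultimately show "0 < gi w" "gi w < 1" by auto
  qed
  define L where "L = {r\<in>R. gi r < gi w}"
  define U where "U = {r\<in>R. gi w < gi r}"
  have "(1,0) \<in> L" using r10 gi_10 gw unfolding L_def by simp
  then have Lne: "L \<noteq> {}" "finite L" using fin unfolding L_def by auto
  have "(0,-1) \<in> U" using r10 gi_0m1 gw unfolding U_def by simp
  then have Une: "U \<noteq> {}" "finite U" using fin unfolding U_def by auto
  obtain u where uL: "u \<in> L" and umax: "\<forall>y\<in>L. gi y \<le> gi u" using ex_argmax[OF Lne(2,1), of gi] by blast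
  obtain v where vU: "v \<in> U" and vmin: "\<forall>y\<in>U. gi v \<le> gi y" using ex_argmin[OF Une(2,1), of gi] by blast
  have uw: "consec R u w"
    unfolding consec_def using uL umax wR unfolding L_def by (auto simp: not_less[symmetric])
  have wv: "consec R w v"
    unfolding consec_def using vU vmin wR unfolding U_def by (auto simp: not_less[symmetric])
  have iuw: "idet u w = -1" and iwv: "idet w v = -1" using chain_det[OF ch] uw wv by auto
  define k where "k = snd u * fst v - fst u * snd v"
  have e1: "fst u + fst v = k * fst w" and e2: "snd u + snd v = k * snd w"
  proof -
    have id1: "(fst u * snd w - snd u * fst w) * (fst u + fst v) =
      ((fst u + fst v) * snd w - (snd u + snd v) * fst w) * fst u +
      (fst u * (snd u + snd v) - snd u * (fst u + fst v)) * fst w" by algebra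
    have id2: "(fst u * snd w - snd u * fst w) * (snd u + snd v) =
      ((fst u + fst v) * snd w - (snd u + snd v) * fst w) * snd u +
      (fst u * (snd u + snd v) - snd u * (fst u + fst v)) * snd w" by algebra
    have a: "fst u * snd w - snd u * fst w = -1" using iuw by (simp add: idet_def)
    have b: "(fst u + fst v) * snd w - (snd u + snd v) * fst w = 0"
      using iuw iwv by (simp add: idet_def algebra_simps)
    have c: "fst u * (snd u + snd v) - snd u * (fst u + fst v) = - k"
      by (simp add: k_def algebra_simps)
    show "fst u + fst v = k * fst w" using id1 a b c by simp
    show "snd u + snd v = k * snd w" using id2 a b c by simp
  qed
  have fk: "f u + f v = k * M" using e1 e2 wR(2) unfolding f_def by (simp add: algebra_simps)
  have uR: "u \<in> R" "gi u < gi w" using uL unfolding L_def by auto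
  have vR: "v \<in> R" using vU unfolding U_def by auto
  have fu: "f u < M"
  proof -
    have "f u \<noteq> M"
    proof
      assume "f u = M"
      then have "u \<in> S" using uR unfolding S_def by simp
      then show False using wmin uR by force
    qed
    then show ?thesis using fM[OF uR(1)] by simp
  qed
  have bounds: "2 \<le> k * M" "k * M \<le> 2 * M - 1" using fk fu fM[OF vR] f1[OF uR(1)] f1[OF vR] by linarith+
  have "k = 1"
  proof (rule ccontr)
    assume "k \<noteq> 1"
    then have "k \<le> 0 \<or> k \<ge> 2" by linarith
    then show False
    proof
      assume "k \<le> 0"
      then have "k * M \<le> 0" using M2 by (simp add: mult_nonpos_nonneg)
      then show False using bounds by linarith
    next
      assume "k \<ge> 2"
      then have "k * M \<ge> 2 * M" using M2 mult_right_mono[of 2 k M] by linarith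
      then show False using bounds by linarith
    qed
  qed
  then have "w = u + v" using e1 e2 by (simp add: prod_eq_iff)
  then show ?thesis using uw wv by blast
qed




lemma cone_pair_C2: "idet x y \<noteq> 0 \<Longrightarrow> cone_gen {x, y} = C2 (rv x) (rv y)"
  using cone_gen_C2 dt_rv by simp

lemma Q1_mem: "p \<in> cone_gen {(1,0),(0,1)} \<longleftrightarrow> fst p \<ge> 0 \<and> snd p \<ge> 0"
  by (subst cone_pair_C2) (auto simp: idet_def C2_mem dt_def rv_def)
lemma Q2_mem: "p \<in> cone_gen {(-1,0),(0,1)} \<longleftrightarrow> fst p \<le> 0 \<and> snd p \<ge> 0"
  by (subst cone_pair_C2) (auto simp: idet_def C2_mem dt_def rv_def)
lemma Q3_mem: "p \<in> cone_gen {(-1,0),(0,-1)} \<longleftrightarrow> fst p \<le> 0 \<and> snd p \<le> 0"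
  by (subst cone_pair_C2) (auto simp: idet_def C2_mem dt_def rv_def)

lemma chain_remove:
  assumes ch: "chain R" and uw: "consec R u w" and wv: "consec R w v" and w: "w = u + v"
  shows "chain (R - {w})"
proof -
  have uR: "u \<in> R" and vR: "v \<in> R" and wR: "w \<in> R" using uw wv unfolding consec_def by auto
  have "0 \<le> gi u" "gi v \<le> 1" using gi_range chain_pt[OF ch uR] chain_pt[OF ch vR] by auto
  then have "0 < gi w" "gi w < 1" using uw wv unfolding consec_def by auto
  then have "w \<noteq> (1,0)" "w \<noteq> (0,-1)" using gi_10 gi_0m1 by auto
  moreover have "idet x y = -1" if "consec (R - {w}) x y" for x y
  proof -
    from that consec_remove[OF ch uw wv] have "consec R x y \<or> (x = u \<and> y = v)" by blast
    then show ?thesis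
    proof
      assume "consec R x y" then show ?thesis using chain_det[OF ch] by blast
    next
      assume xy: "x = u \<and> y = v"
      have "idet u w = idet u v" using w by (simp add: idet_def algebra_simps)
      then show ?thesis using chain_det[OF ch uw] xy by simp
    qed
  qed
  ultimately show ?thesis using ch unfolding chain_def by auto
qed

lemma consec_C2:
  assumes ch: "chain R" and c: "consec R x y"
  shows "cone_gen {x, y} = C2 (rv x) (rv y)" "dt (rv x) (rv y) = -1"
  using cone_pair_C2 chain_det[OF ch c] dt_rv by auto

lemma notin_fan:
  assumes ch: "chain R" and uw: "consec R u w" and wv: "consec R w v" and w: "w = u + v"
  shows "cone_gen {u, v} \<notin> fan_of R"
proof
  assume C: "cone_gen {u, v} \<in> fan_of R"
  have uR: "u \<in> R" and vR: "v \<in> R" and wR: "w \<in> R" using uw wv unfolding consec_def by auto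
  define a where "a = rv u"
  define b where "b = rv v"
  define c where "c = rv w"
  have pa: "a \<in> Q4r" "a \<noteq> 0" using good_pt chain_pt[OF ch uR] a_def by auto
  have pb: "b \<in> Q4r" "b \<noteq> 0" using good_pt chain_pt[OF ch vR] b_def by auto
  have pc: "c \<in> Q4r" "c \<noteq> 0" using good_pt chain_pt[OF ch wR] c_def by auto
  have g: "gk a < gk c" "gk c < gk b" using uw wv unfolding consec_def gi_def a_def b_def c_def by auto
  have g01: "0 < gk c" "gk c < 1" using g gk_range(1)[OF pa] gk_range(2)[OF pb] by linarith+
  have "idet u v = idet u w" using w by (simp add: idet_def algebra_simps)
  then have "idet u v = -1" using chain_det[OF ch uw] by simp
  then have CC: "cone_gen {u, v} = C2 a b" using cone_pair_C2 a_def b_def by simp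
  have mem: "p \<in> C2 a b \<longleftrightarrow> p = 0 \<or> (p \<in> Q4r \<and> gk a \<le> gk p \<and> gk p \<le> gk b)" for p
    using C2_Q4_mem[OF pa pb] g by simp
  have inC: "a \<in> cone_gen {u, v}" "b \<in> cone_gen {u, v}" "c \<in> cone_gen {u, v}"
    unfolding CC using mem[of a] mem[of b] mem[of c] pa pb pc g by simp_all
  consider (f) "cone_gen {u, v} \<in> fix6" | (r) e where "e \<in> R" "cone_gen {u, v} = cone_gen {e}"
    | (p) x y where "consec R x y" "cone_gen {u, v} = cone_gen {x, y}"
    using C unfolding fan_of_def by blast
  then show False
  proof cases
    case f
    have ray: False if "cone_gen {u, v} = cone_gen {e}" for e
    proof -
      have "a \<in> R1 (rv e)" "b \<in> R1 (rv e)" using inC that cone_gen_single by auto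
      then have "R1 (rv e) = R1 a" using R1_eq[of a "rv e" a] R1_self pa by blast
      then have "b \<in> R1 a" using \<open>b \<in> R1 (rv e)\<close> by simp
      then have "gk b = gk a" using R1_gk(2)[OF pa _ pb(2)] by blast
      then show False using g by simp
    qed
    from f show False unfolding fix6_def
    proof (elim insertE)
      assume "cone_gen {u, v} = cone_gen {}"
      then show False using inC pa cone_gen_empty by auto
    next
      assume "cone_gen {u, v} = cone_gen {(0, 1)}" then show False using ray by blast
    next
      assume "cone_gen {u, v} = cone_gen {(-1, 0)}" then show False using ray by blast
    next
      assume "cone_gen {u, v} = cone_gen {(1, 0), (0, 1)}"
      then have "snd c \<ge> 0" using inC Q1_mem by auto
      then have "snd c = 0" using pc by (auto simp: Q4r_def)
      then show False using gk_range(3)[OF pc] g01 by simp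
    next
      assume "cone_gen {u, v} = cone_gen {(-1, 0), (0, 1)}"
      then have "fst c \<le> 0" using inC Q2_mem by auto
      then have "fst c = 0" using pc by (auto simp: Q4r_def)
      then show False using gk_range(4)[OF pc] g01 by simp
    next
      assume "cone_gen {u, v} = cone_gen {(-1, 0), (0, -1)}"
      then have "fst c \<le> 0" using inC Q3_mem by auto
      then have "fst c = 0" using pc by (auto simp: Q4r_def)
      then show False using gk_range(4)[OF pc] g01 by simp
    qed simp
  next
    case r
    have "a \<in> R1 (rv e)" "b \<in> R1 (rv e)" using inC r cone_gen_single by auto
    then have "R1 (rv e) = R1 a" using R1_eq[of a "rv e" a] R1_self pa by blast
    then have "b \<in> R1 a" using \<open>b \<in> R1 (rv e)\<close> by simp
      then have "gk b = gk a" using R1_gk(2)[OF pa _ pb(2)] by blast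
    then show False using g by simp
  next
    case p
    have xR: "x \<in> R" "y \<in> R" using p unfolding consec_def by auto
    have px: "rv x \<in> Q4r" "rv x \<noteq> 0" using good_pt chain_pt[OF ch xR(1)] by auto
    have py: "rv y \<in> Q4r" "rv y \<noteq> 0" using good_pt chain_pt[OF ch xR(2)] by auto
    have gxy: "gk (rv x) < gk (rv y)" using p unfolding consec_def gi_def by auto
    have CX: "cone_gen {u, v} = C2 (rv x) (rv y)" using p consec_C2[OF ch p(1)] by simp
    have between: "gk (rv x) \<le> gk q \<and> gk q \<le> gk (rv y)" if "q \<in> cone_gen {u, v}" "q \<noteq> 0" for q
      using that CX C2_Q4_mem[OF px py gxy] by auto
    have nb: "gk (rv z) = gk (rv x) \<or> gk (rv z) = gk (rv y)" if "z \<in> R" "rv z \<in> cone_gen {u, v}" for z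
    proof -
      have "rv z \<noteq> 0" using good_pt chain_pt[OF ch that(1)] by auto
      then have "gk (rv x) \<le> gk (rv z) \<and> gk (rv z) \<le> gk (rv y)" using between that by blast
      moreover have "\<not> (gi x < gi z \<and> gi z < gi y)" using p that unfolding consec_def by blast
      ultimately show ?thesis unfolding gi_def by linarith
    qed
    have "gk a = gk (rv x) \<or> gk a = gk (rv y)" using nb[OF uR] inC a_def by simp
    moreover have "gk c = gk (rv x) \<or> gk c = gk (rv y)" using nb[OF wR] inC c_def by simp
    moreover have "gk b = gk (rv x) \<or> gk b = gk (rv y)" using nb[OF vR] inC b_def by simp
    ultimately show False using g by linarith
  qed
qed


lemma step_lemma:
  assumes ch: "chain R" and uw: "consec R u w" and wv: "consec R w v" and w: "w = u + v"
  shows "subdivision_step (fan_of (R - {w})) (fan_of R)"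
proof -
  define R' where "R' = R - {w}"
  have ch': "chain R'" using chain_remove[OF assms] R'_def by simp
  have cuv: "consec R' u v" using consec_remove[OF ch uw wv] R'_def by simp
  have uR: "u \<in> R" and vR: "v \<in> R" and wR: "w \<in> R" using uw wv unfolding consec_def by auto
  have prim: "primitive u" "primitive v" using chain_pt[OF ch] uR vR by auto
  have "dt (rv u) (rv v) = -1" using consec_C2[OF ch' cuv] by simp
  then have ad: "aff_dim (cone_gen {u, v}) = 2" using consec_C2[OF ch' cuv] aff_dim_C2 by simp
  have inF: "cone_gen {u, v} \<in> fan_of R'" using cuv unfolding fan_of_def by blast
  have dim: "cone_gen {u, v} \<in> cones_dim (fan_of R') 2" using inF ad unfolding cones_dim_def by simp
  have nC: "cone_gen {u, v} \<notin> fan_of R" using notin_fan[OF assms] .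
  have cr: "consec R' x y \<longleftrightarrow> (consec R x y \<and> x \<noteq> w \<and> y \<noteq> w) \<or> (x = u \<and> y = v)" for x y
    using consec_remove[OF ch uw wv] R'_def by simp
  have eq: "fan_of R = (fan_of R' - {cone_gen {u, v}}) \<union>
      {cone_gen {u + v}, cone_gen {u, u + v}, cone_gen {v, u + v}}"
  proof
    show "fan_of R \<subseteq> (fan_of R' - {cone_gen {u, v}}) \<union>
      {cone_gen {u + v}, cone_gen {u, u + v}, cone_gen {v, u + v}}"
    proof
      fix X assume X: "X \<in> fan_of R"
      then have XC: "X \<noteq> cone_gen {u, v}" using nC by blast
      consider (f) "X \<in> fix6" | (r) e where "e \<in> R" "X = cone_gen {e}"
        | (p) x y where "consec R x y" "X = cone_gen {x, y}"
        using X unfolding fan_of_def by blast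
      then show "X \<in> (fan_of R' - {cone_gen {u, v}}) \<union>
          {cone_gen {u + v}, cone_gen {u, u + v}, cone_gen {v, u + v}}"
      proof cases
        case f then show ?thesis using XC unfolding fan_of_def by blast
      next
        case r
        show ?thesis
        proof (cases "e = w")
          case True then show ?thesis using r w by simp
        next
          case False then have "e \<in> R'" using r R'_def by simp
          then show ?thesis using r XC unfolding fan_of_def by blast
        qed
      next
        case p
        show ?thesis
        proof (cases "x = w")
          case True
          then have "y = v" using consec_right_unique[OF ch wv] p by simp
          then have "X = cone_gen {v, u + v}" using p True w by (simp add: insert_commute)
          then show ?thesis by simp
        next
          case False
          show ?thesis
          proof (cases "y = w")
            case True
            then have "x = u" using consec_left_unique[OF ch uw] p by simp
            then have "X = cone_gen {u, u + v}" using p True w by simp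
            then show ?thesis by simp
          next
            case False
            then have "consec R' x y" using cr p \<open>x \<noteq> w\<close> by simp
            then show ?thesis using p XC unfolding fan_of_def by blast
          qed
        qed
      qed
    qed
    show "(fan_of R' - {cone_gen {u, v}}) \<union>
      {cone_gen {u + v}, cone_gen {u, u + v}, cone_gen {v, u + v}} \<subseteq> fan_of R"
    proof
      fix X assume X: "X \<in> (fan_of R' - {cone_gen {u, v}}) \<union>
        {cone_gen {u + v}, cone_gen {u, u + v}, cone_gen {v, u + v}}"
      then consider (old) "X \<in> fan_of R'" "X \<noteq> cone_gen {u, v}" | (n1) "X = cone_gen {u + v}"
        | (n2) "X = cone_gen {u, u + v}" | (n3) "X = cone_gen {v, u + v}" by blast
      then show "X \<in> fan_of R"
      proof cases
        case old
        consider (f) "X \<in> fix6" | (r) e where "e \<in> R'" "X = cone_gen {e}"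
          | (p) x y where "consec R' x y" "X = cone_gen {x, y}"
          using old unfolding fan_of_def by blast
        then show ?thesis
        proof cases
          case f then show ?thesis unfolding fan_of_def by blast
        next
          case r then show ?thesis unfolding fan_of_def R'_def by blast
        next
          case p
          then have "consec R x y" using cr old by auto
          then show ?thesis using p unfolding fan_of_def by blast
        qed
      next
        case n1 then show ?thesis using wR w unfolding fan_of_def by blast
      next
        case n2 then show ?thesis using uw w unfolding fan_of_def by blast
      next
        case n3
        then have "X = cone_gen {w, v}" using w by (simp add: insert_commute)
        then show ?thesis using wv unfolding fan_of_def by blast
      qed
    qed
  qed
  show ?thesis unfolding subdivision_step_def R'_def[symmetric]
    using prim dim eq by blast
qed

lemma forward:
  "chain R \<Longrightarrow> subdivision_step\<^sup>*\<^sup>* Sigma0000 (fan_of R)"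
proof (induction "card R" arbitrary: R rule: less_induct)
  case less
  have fin: "finite R" using less.prems by (simp add: chain_def)
  have sub: "{(1,0),(0,-1)} \<subseteq> R" using less.prems by (simp add: chain_def)
  show ?case
  proof (cases "card R \<ge> 3")
    case False
    have c2: "card {(1::int,0::int),(0,-1)} = 2" by simp
    then have "card R \<ge> 2" using card_mono[OF fin sub] by simp
    then have "card {(1::int,0::int),(0,-1)} = card R" using False c2 by simp
    then have "R = {(1,0),(0,-1)}" using card_subset_eq[OF fin sub] by simp
    then show ?thesis using Sigma0000_eq by simp
  next
    case True
    obtain u w v where uwv: "consec R u w" "consec R w v" "w = u + v"
      using blowdown[OF less.prems True] by blast
    have wR: "w \<in> R" using uwv unfolding consec_def by auto
    have "card (R - {w}) < card R" using card_Diff1_less[OF fin wR] .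
    moreover have "chain (R - {w})" using chain_remove[OF less.prems uwv] .
    ultimately have "subdivision_step\<^sup>*\<^sup>* Sigma0000 (fan_of (R - {w}))" using less.hyps by blast
    moreover have "subdivision_step (fan_of (R - {w})) (fan_of R)" using step_lemma[OF less.prems uwv] .
    ultimately show ?thesis by (rule rtranclp.rtrancl_into_rtrancl)
  qed
qed




lemma cone_gen_add:
  assumes "x \<in> cone_gen S" "y \<in> cone_gen S"
  shows "x + y \<in> cone_gen S"
proof -
  obtain c where c: "x = (\<Sum>v\<in>S. c v *\<^sub>R rv v)" "\<forall>v\<in>S. c v \<ge> 0" using assms(1) unfolding cone_gen_def by blast
  obtain d where d: "y = (\<Sum>v\<in>S. d v *\<^sub>R rv v)" "\<forall>v\<in>S. d v \<ge> 0" using assms(2) unfolding cone_gen_def by blast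
  have "x + y = (\<Sum>v\<in>S. (c v + d v) *\<^sub>R rv v)" using c d by (simp add: sum.distrib scaleR_add_left)
  moreover have "\<forall>v\<in>S. c v + d v \<ge> 0" using c d by auto
  ultimately show ?thesis unfolding cone_gen_def by (intro CollectI exI[where x="\<lambda>v. c v + d v"]) simp
qed

lemma cone_gen_scale:
  assumes "x \<in> cone_gen S" "0 \<le> t"
  shows "t *\<^sub>R x \<in> cone_gen S"
proof -
  obtain c where c: "x = (\<Sum>v\<in>S. c v *\<^sub>R rv v)" "\<forall>v\<in>S. c v \<ge> 0" using assms(1) unfolding cone_gen_def by blast
  have "t *\<^sub>R x = (\<Sum>v\<in>S. (t * c v) *\<^sub>R rv v)" using c by (simp add: scaleR_sum_right)
  moreover have "\<forall>v\<in>S. t * c v \<ge> 0" using c assms(2) by auto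
  ultimately show ?thesis unfolding cone_gen_def by (intro CollectI exI[where x="\<lambda>v. t * c v"]) simp
qed

lemma convex_cone_gen: "convex (cone_gen S)"
  unfolding convex_def using cone_gen_add cone_gen_scale by blast

context
  fixes \<Sigma> :: "cone2 set"
  assumes F: "\<Sigma> \<in> cFan_sc"
begin

lemma S_fin: "finite \<Sigma>" using F by (simp add: cFan_sc_def complete_fan_def is_fan_def)
lemma S_scrp: "\<sigma> \<in> \<Sigma> \<Longrightarrow> scrp_cone \<sigma>" using F by (simp add: cFan_sc_def complete_fan_def is_fan_def)
lemma S_face: "\<sigma> \<in> \<Sigma> \<Longrightarrow> \<tau> face_of \<sigma> \<Longrightarrow> \<tau> \<noteq> {} \<Longrightarrow> \<tau> \<in> \<Sigma>"
  using F by (simp add: cFan_sc_def complete_fan_def is_fan_def)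
lemma S_int: "\<sigma> \<in> \<Sigma> \<Longrightarrow> \<tau> \<in> \<Sigma> \<Longrightarrow> (\<sigma> \<inter> \<tau>) face_of \<sigma> \<and> (\<sigma> \<inter> \<tau>) face_of \<tau>"
  using F by (simp add: cFan_sc_def complete_fan_def is_fan_def)
lemma S_cover: "\<exists>\<sigma>\<in>\<Sigma>. p \<in> \<sigma>"
proof -
  have "\<Union>\<Sigma> = UNIV" using F by (simp add: cFan_sc_def complete_fan_def)
  then show ?thesis by blast
qed
lemma S_ns: "\<sigma> \<in> \<Sigma> \<Longrightarrow> aff_dim \<sigma> = 2 \<Longrightarrow> \<exists>u v. \<bar>idet u v\<bar> = 1 \<and> \<sigma> = cone_gen {u, v}"
  using F unfolding cFan_sc_def nonsingular_def cones_dim_def idet_def by auto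
lemma S_Q: "cone_gen {(1,0),(0,1)} \<in> \<Sigma>" "cone_gen {(-1,0),(0,-1)} \<in> \<Sigma>" "cone_gen {(-1,0),(0,1)} \<in> \<Sigma>"
  using F by (simp_all add: cFan_sc_def)
lemma S_quad: "\<sigma> \<in> \<Sigma> \<Longrightarrow> in_closed_quadrant \<sigma>" using F by (simp add: cFan_sc_def)
lemma S_card: "\<rho> \<in> \<Sigma> \<Longrightarrow> aff_dim \<rho> = 1 \<Longrightarrow> card {\<sigma>\<in>cones_dim \<Sigma> 2. \<rho> face_of \<sigma>} = 2"
  using F unfolding cFan_sc_def cones_dim_def by auto

lemma S_cone: "\<sigma> \<in> \<Sigma> \<Longrightarrow> \<exists>S. \<sigma> = cone_gen S"
  using S_scrp unfolding scrp_cone_def by blast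
lemma S_sc: "\<sigma> \<in> \<Sigma> \<Longrightarrow> \<sigma> \<inter> uminus ` \<sigma> = {0}"
  using S_scrp unfolding scrp_cone_def by blast
lemma S_zero: "\<sigma> \<in> \<Sigma> \<Longrightarrow> 0 \<in> \<sigma>" using S_sc by blast
lemma S_add: assumes "\<sigma> \<in> \<Sigma>" "x \<in> \<sigma>" "y \<in> \<sigma>" shows "x + y \<in> \<sigma>"
proof -
  obtain S where "\<sigma> = cone_gen S" using S_cone assms(1) by blast
  then show ?thesis using cone_gen_add assms by simp
qed
lemma S_scale: assumes "\<sigma> \<in> \<Sigma>" "x \<in> \<sigma>" "0 \<le> t" shows "t *\<^sub>R x \<in> \<sigma>"
proof -
  obtain S where "\<sigma> = cone_gen S" using S_cone assms(1) by blast
  then show ?thesis using cone_gen_scale assms by simp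
qed
lemma S_convex: assumes "\<sigma> \<in> \<Sigma>" shows "convex \<sigma>"
proof -
  obtain S where "\<sigma> = cone_gen S" using S_cone assms(1) by blast
  then show ?thesis using convex_cone_gen by simp
qed

lemma S_2cone:
  assumes "\<sigma> \<in> \<Sigma>" "aff_dim \<sigma> = 2"
  shows "\<exists>u v. \<bar>idet u v\<bar> = 1 \<and> \<sigma> = cone_gen {u, v} \<and> \<sigma> = C2 (rv u) (rv v) \<and>
     dt (rv u) (rv v) \<noteq> 0 \<and> primitive u \<and> primitive v \<and> cone_gen {u} \<in> \<Sigma> \<and> cone_gen {v} \<in> \<Sigma>"
proof -
  obtain u v where uv: "\<bar>idet u v\<bar> = 1" "\<sigma> = cone_gen {u, v}" using S_ns assms by blast
  have d: "dt (rv u) (rv v) \<noteq> 0" using uv dt_rv by auto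
  have C: "\<sigma> = C2 (rv u) (rv v)" using uv cone_pair_C2 by auto
  have "R1 (rv u) face_of \<sigma>" "R1 (rv v) face_of \<sigma>" using R1a_face[OF d] R1b_face[OF d] C by simp_all
  moreover have "R1 (rv u) \<noteq> {}" "R1 (rv v) \<noteq> {}" using R1_zero by blast+
  ultimately have "R1 (rv u) \<in> \<Sigma>" "R1 (rv v) \<in> \<Sigma>" using S_face[OF assms(1)] by blast+
  then have "cone_gen {u} \<in> \<Sigma>" "cone_gen {v} \<in> \<Sigma>" using cone_gen_single by simp_all
  moreover
  ultimately show ?thesis using uv d C prim_of_det by blast
qed

lemma aff_dim_cases:
  fixes \<sigma> :: "(real \<times> real) set"
  shows "aff_dim \<sigma> = -1 \<or> aff_dim \<sigma> = 0 \<or> aff_dim \<sigma> = 1 \<or> aff_dim \<sigma> = 2"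
proof -
  have "aff_dim \<sigma> \<ge> -1" by (rule aff_dim_geq)
  moreover have "aff_dim \<sigma> \<le> 2" using aff_dim_le_DIM[of \<sigma>] by simp
  ultimately show ?thesis by linarith
qed

lemma S_1cone:
  assumes "\<sigma> \<in> \<Sigma>" "aff_dim \<sigma> = 1"
  shows "\<exists>e. primitive e \<and> \<sigma> = cone_gen {e}"
proof -
  have "card {\<tau>\<in>cones_dim \<Sigma> 2. \<sigma> face_of \<tau>} = 2" using S_card assms by blast
  then have "{\<tau>\<in>cones_dim \<Sigma> 2. \<sigma> face_of \<tau>} \<noteq> {}" by (metis card.empty zero_neq_numeral)
  then obtain \<tau> where t: "\<tau> \<in> \<Sigma>" "aff_dim \<tau> = 2" "\<sigma> face_of \<tau>" unfolding cones_dim_def by blast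
  obtain u v where uv: "\<bar>idet u v\<bar> = 1" "\<tau> = C2 (rv u) (rv v)" "dt (rv u) (rv v) \<noteq> 0"
    "primitive u" "primitive v" using S_2cone[OF t(1,2)] by blast
  have "\<sigma> = {} \<or> \<sigma> = {0} \<or> \<sigma> = R1 (rv u) \<or> \<sigma> = R1 (rv v) \<or> \<sigma> = \<tau>"
    using faces_C2[OF uv(3)] t(3) uv(2) by simp
  then have "\<sigma> = R1 (rv u) \<or> \<sigma> = R1 (rv v)" using assms(2) t(2) by auto
  then show ?thesis using uv cone_gen_single by metis
qed

end



definition Rof :: "cone2 set \<Rightarrow> lvec set" where
  "Rof \<Sigma> = {w. inQ4 w \<and> primitive w \<and> cone_gen {w} \<in> \<Sigma>}"

lemma Rof_pt: "w \<in> Rof \<Sigma> \<Longrightarrow> inQ4 w \<and> primitive w \<and> cone_gen {w} \<in> \<Sigma>"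
  by (simp add: Rof_def)

lemma Rof_good: "w \<in> Rof \<Sigma> \<Longrightarrow> rv w \<in> Q4r \<and> rv w \<noteq> 0"
  using good_pt Rof_pt by blast

lemma Rof_inj: "x \<in> Rof \<Sigma> \<Longrightarrow> y \<in> Rof \<Sigma> \<Longrightarrow> gi x = gi y \<Longrightarrow> x = y"
  using gi_inj Rof_pt unfolding gi_def by blast

lemma C2_corners: "dt a b \<noteq> 0 \<Longrightarrow> a \<in> C2 a b \<and> b \<in> C2 a b"
  by (simp add: C2_mem dt_simps)

context
  fixes \<Sigma> :: "cone2 set"
  assumes F: "\<Sigma> \<in> cFan_sc"
begin

lemma pair_faces:
  assumes "cone_gen {x, y} \<in> \<Sigma>" "idet x y \<noteq> 0"
  shows "cone_gen {x} \<in> \<Sigma>" "cone_gen {y} \<in> \<Sigma>" "cone_gen {} \<in> \<Sigma>"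
proof -
  have d: "dt (rv x) (rv y) \<noteq> 0" using assms(2) dt_rv by simp
  have C: "cone_gen {x, y} = C2 (rv x) (rv y)" using cone_pair_C2 assms(2) by simp
  have "R1 (rv x) face_of cone_gen {x, y}" "R1 (rv y) face_of cone_gen {x, y}" "{0} face_of cone_gen {x, y}"
    using R1a_face[OF d] R1b_face[OF d] zero_face[OF d] C by simp_all
  moreover have "R1 (rv x) \<noteq> {}" "R1 (rv y) \<noteq> {}" using R1_zero by blast+
  ultimately have "R1 (rv x) \<in> \<Sigma>" "R1 (rv y) \<in> \<Sigma>" "{0} \<in> \<Sigma>" using S_face[OF F assms(1)] by blast+
  then show "cone_gen {x} \<in> \<Sigma>" "cone_gen {y} \<in> \<Sigma>" "cone_gen {} \<in> \<Sigma>"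
    using cone_gen_single cone_gen_empty by simp_all
qed

lemma basic_in: "cone_gen {} \<in> \<Sigma>" "cone_gen {(1,0)} \<in> \<Sigma>" "cone_gen {(0,1)} \<in> \<Sigma>"
  "cone_gen {(-1,0)} \<in> \<Sigma>" "cone_gen {(0,-1)} \<in> \<Sigma>"
  using pair_faces[OF S_Q(1)[OF F]] pair_faces[OF S_Q(2)[OF F]] pair_faces[OF S_Q(3)[OF F]]
  by (simp_all add: idet_def)

lemma Rof_fin: "finite (Rof \<Sigma>)"
proof -
  have "inj_on (\<lambda>w. cone_gen {w}) (Rof \<Sigma>)"
  proof
    fix x y assume xy: "x \<in> Rof \<Sigma>" "y \<in> Rof \<Sigma>" "cone_gen {x} = cone_gen {y}"
    then have "rv x \<in> R1 (rv y)" using R1_self cone_gen_single by metis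
    then obtain c where c: "rv x = c *\<^sub>R rv y" "c \<ge> 0" unfolding R1_def by auto
    have "c \<noteq> 0" using c Rof_good[OF xy(1)] by auto
    then show "x = y" using primitive_unique[of x y c] c Rof_pt xy by auto
  qed
  moreover have "(\<lambda>w. cone_gen {w}) ` Rof \<Sigma> \<subseteq> \<Sigma>" using Rof_pt by blast
  then have "finite ((\<lambda>w. cone_gen {w}) ` Rof \<Sigma>)" using S_fin[OF F] finite_subset by blast
  ultimately show ?thesis using finite_imageD by blast
qed

lemma quad4:
  assumes "\<sigma> \<in> \<Sigma>" "p \<in> \<sigma>" "fst p > 0" "snd p < 0"
  shows "\<sigma> \<subseteq> Q4r"
proof -
  obtain s1 s2 :: real where s: "s1 \<in> {1,-1}" "s2 \<in> {1,-1}" "\<sigma> \<subseteq> {x. s1 * fst x \<ge> 0 \<and> s2 * snd x \<ge> 0}"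
    using S_quad[OF F assms(1)] unfolding in_closed_quadrant_def by blast
  have "s1 * fst p \<ge> 0" "s2 * snd p \<ge> 0" using s(3) assms(2) by auto
  then have "s1 = 1" "s2 = -1" using s(1,2) assms(3,4) by auto
  then show ?thesis using s(3) unfolding Q4r_def by auto
qed

lemma no_inner_ray:
  assumes s: "\<sigma> \<in> \<Sigma>" "\<sigma> = C2 (rv a) (rv b)" and ab: "a \<in> Rof \<Sigma>" "b \<in> Rof \<Sigma>" "gi a < gi b"
    and z: "z \<in> Rof \<Sigma>" "gi a < gi z" "gi z < gi b"
  shows False
proof -
  have qa: "rv a \<in> Q4r" "rv a \<noteq> 0" and qb: "rv b \<in> Q4r" "rv b \<noteq> 0" and qz: "rv z \<in> Q4r" "rv z \<noteq> 0"
    using Rof_good ab z by auto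
  have gab: "gk (rv a) < gk (rv b)" using ab(3) gi_def by simp
  have d: "dt (rv a) (rv b) \<noteq> 0" using gk_less[OF qa qb] gab by simp
  have mem: "q \<in> \<sigma> \<longleftrightarrow> q = 0 \<or> (q \<in> Q4r \<and> gk (rv a) \<le> gk q \<and> gk q \<le> gk (rv b))" for q
    using C2_Q4_mem[OF qa qb gab] s(2) by simp
  have sub: "R1 (rv z) \<subseteq> \<sigma>"
  proof
    fix q assume q: "q \<in> R1 (rv z)"
    show "q \<in> \<sigma>"
    proof (cases "q = 0")
      case True then show ?thesis using mem by simp
    next
      case False
      then have "q \<in> Q4r" "gk q = gk (rv z)" using R1_gk[OF qz q] by auto
      then show ?thesis using mem z unfolding gi_def by auto
    qed
  qed
  have "cone_gen {z} \<in> \<Sigma>" using Rof_pt z(1) by blast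
  then have "(\<sigma> \<inter> R1 (rv z)) face_of \<sigma>" using S_int[OF F s(1)] cone_gen_single by simp
  then have "R1 (rv z) face_of C2 (rv a) (rv b)" using sub s(2) by (simp add: Int_absorb1)
  then have "R1 (rv z) = {} \<or> R1 (rv z) = {0} \<or> R1 (rv z) = R1 (rv a) \<or> R1 (rv z) = R1 (rv b) \<or>
      R1 (rv z) = C2 (rv a) (rv b)" using faces_C2[OF d] by blast
  moreover have "rv z \<in> R1 (rv z)" by (rule R1_self)
  moreover have "rv z \<notin> R1 (rv a)"
  proof
    assume "rv z \<in> R1 (rv a)"
    then have "gk (rv z) = gk (rv a)" using R1_gk(2)[OF qa _ qz(2)] by blast
    then show False using z unfolding gi_def by simp
  qed
  moreover have "rv z \<notin> R1 (rv b)"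
  proof
    assume "rv z \<in> R1 (rv b)"
    then have "gk (rv z) = gk (rv b)" using R1_gk(2)[OF qb _ qz(2)] by blast
    then show False using z unfolding gi_def by simp
  qed
  moreover have "rv b \<notin> R1 (rv z)"
  proof
    assume "rv b \<in> R1 (rv z)"
    then have "gk (rv b) = gk (rv z)" using R1_gk(2)[OF qz _ qb(2)] by blast
    then show False using z unfolding gi_def by simp
  qed
  moreover have "rv b \<in> C2 (rv a) (rv b)" using C2_corners[OF d] by blast
  ultimately show False using qz by auto
qed


lemma consec_in:
  assumes c: "consec (Rof \<Sigma>) x y"
  shows "cone_gen {x, y} \<in> \<Sigma> \<and> idet x y = -1"
proof -
  have xR: "x \<in> Rof \<Sigma>" "y \<in> Rof \<Sigma>" and gxy: "gi x < gi y"
    and nb: "\<not> (\<exists>z\<in>Rof \<Sigma>. gi x < gi z \<and> gi z < gi y)" using c unfolding consec_def by auto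
  define px where "px = rv x"
  define py where "py = rv y"
  have qx: "px \<in> Q4r" "px \<noteq> 0" and qy: "py \<in> Q4r" "py \<noteq> 0" using Rof_good xR px_def py_def by auto
  have D: "dt px py < 0" using gk_less[OF qx qy] gxy gi_def px_def py_def by simp
  define p where "p = px + py"
  have p1: "fst p > 0"
  proof (rule ccontr)
    assume "\<not> fst p > 0"
    then have "fst px = 0" "fst py = 0" using qx qy unfolding p_def Q4r_def by auto
    then show False using D by (simp add: dt_def)
  qed
  have p2: "snd p < 0"
  proof (rule ccontr)
    assume "\<not> snd p < 0"
    then have "snd px = 0" "snd py = 0" using qx qy unfolding p_def Q4r_def by auto
    then show False using D by (simp add: dt_def)
  qed
  have qp: "p \<in> Q4r" "p \<noteq> 0" using p1 p2 unfolding Q4r_def by auto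
  have gp: "gk px < gk p" "gk p < gk py"
    using gk_less[OF qx qp] gk_less[OF qp qy] D unfolding p_def by (simp_all add: dt_simps)
  obtain \<sigma> where s: "\<sigma> \<in> \<Sigma>" "p \<in> \<sigma>" using S_cover[OF F] by blast
  have sQ: "\<sigma> \<subseteq> Q4r" using quad4[OF s p1 p2] .
  consider "aff_dim \<sigma> = -1" | "aff_dim \<sigma> = 0" | "aff_dim \<sigma> = 1" | "aff_dim \<sigma> = 2"
    using aff_dim_cases[OF F] by blast
  then show ?thesis
  proof cases
    case 1 then show ?thesis using s aff_dim_empty[of \<sigma>] by auto
  next
    case 2
    then obtain c where "\<sigma> = {c}" using aff_dim_eq_0 by blast
    then show ?thesis using S_zero[OF F s(1)] s(2) qp by auto
  next
    case 3
    then obtain e where e: "primitive e" "\<sigma> = cone_gen {e}" using S_1cone[OF F s(1)] by blast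
    then have sR: "\<sigma> = R1 (rv e)" using cone_gen_single by simp
    have "rv e \<in> Q4r" using R1_self sR sQ by blast
    then have eR: "e \<in> Rof \<Sigma>" using e s(1) rv_Q4 unfolding Rof_def by auto
    have "gk p = gk (rv e)" using R1_gk(2)[of "rv e" p] Rof_good[OF eR] s(2) sR qp by blast
    then have "gi x < gi e" "gi e < gi y" using gp unfolding gi_def px_def py_def by auto
    then show ?thesis using nb eR by blast
  next
    case 4
    obtain a0 b0 where ab0: "\<bar>idet a0 b0\<bar> = 1" "\<sigma> = cone_gen {a0, b0}" "\<sigma> = C2 (rv a0) (rv b0)"
      "dt (rv a0) (rv b0) \<noteq> 0" "primitive a0" "primitive b0" "cone_gen {a0} \<in> \<Sigma>" "cone_gen {b0} \<in> \<Sigma>"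
      using S_2cone[OF F s(1) 4] by blast
    have "rv a0 \<in> \<sigma>" "rv b0 \<in> \<sigma>" using C2_corners[OF ab0(4)] ab0(3) by auto
    then have "rv a0 \<in> Q4r" "rv b0 \<in> Q4r" using sQ by blast+
    then have "inQ4 a0" "inQ4 b0" using rv_Q4 by blast+
    then have R0: "a0 \<in> Rof \<Sigma>" "b0 \<in> Rof \<Sigma>" using ab0 unfolding Rof_def by auto
    have "a0 \<noteq> b0" using ab0(1) by (auto simp: idet_def)
    then have "gi a0 \<noteq> gi b0" using Rof_inj R0 by blast
    then obtain a b where ab: "a \<in> Rof \<Sigma>" "b \<in> Rof \<Sigma>" "gi a < gi b" "\<sigma> = C2 (rv a) (rv b)"
      "\<bar>idet a b\<bar> = 1" "\<sigma> = cone_gen {a, b}"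
    proof (cases "gi a0 < gi b0")
      case True then show ?thesis using that R0 ab0 by blast
    next
      case False
      then have "gi b0 < gi a0" using \<open>gi a0 \<noteq> gi b0\<close> by simp
      moreover have "\<sigma> = C2 (rv b0) (rv a0)" using ab0(3) C2_swap by simp
      moreover have "\<bar>idet b0 a0\<bar> = 1" using ab0(1) unfolding idet_def by (metis abs_minus_commute mult.commute)
      moreover have "\<sigma> = cone_gen {b0, a0}" using ab0(2) by (simp add: insert_commute)
      ultimately show ?thesis using that R0 by blast
    qed
    have qa: "rv a \<in> Q4r" "rv a \<noteq> 0" and qb: "rv b \<in> Q4r" "rv b \<noteq> 0" using Rof_good ab by auto
    have gab: "gk (rv a) < gk (rv b)" using ab(3) gi_def by simp
    have pin: "gk (rv a) \<le> gk p" "gk p \<le> gk (rv b)"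
      using C2_Q4_mem[OF qa qb gab, of p] ab(4) s(2) qp by auto
    have ax: "gi a \<le> gi x"
    proof (rule ccontr)
      assume "\<not> gi a \<le> gi x"
      then have "gi x < gi a" "gi a < gi y" using pin gp unfolding gi_def px_def py_def by auto
      then show False using nb ab(1) by blast
    qed
    have yb: "gi y \<le> gi b"
    proof (rule ccontr)
      assume "\<not> gi y \<le> gi b"
      then have "gi x < gi b" "gi b < gi y" using pin gp unfolding gi_def px_def py_def by auto
      then show False using nb ab(2) by blast
    qed
    have "gi a = gi x"
    proof (rule ccontr)
      assume "gi a \<noteq> gi x"
      then have "gi a < gi x" "gi x < gi b" using ax yb gxy by auto
      then show False using no_inner_ray[OF s(1) ab(4) ab(1,2,3) xR(1)] by blast
    qed
    then have "a = x" using Rof_inj ab(1) xR(1) by blast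
    have "gi b = gi y"
    proof (rule ccontr)
      assume "gi b \<noteq> gi y"
      then have "gi a < gi y" "gi y < gi b" using ax yb gxy by auto
      then show False using no_inner_ray[OF s(1) ab(4) ab(1,2,3) xR(2)] by blast
    qed
    then have "b = y" using Rof_inj ab(2) xR(2) by blast
    have "idet x y < 0" using gi_less_iff Rof_pt xR gxy by blast
    then show ?thesis using ab \<open>a = x\<close> \<open>b = y\<close> s(1) by auto
  qed
qed

lemma chain_Rof: "chain (Rof \<Sigma>)"
proof -
  have "(1,0) \<in> Rof \<Sigma>" using basic_in prim_10 unfolding Rof_def by simp
  moreover have "(0,-1) \<in> Rof \<Sigma>" using basic_in prim_0m1 unfolding Rof_def by simp
  moreover have "\<forall>w\<in>Rof \<Sigma>. inQ4 w \<and> primitive w" using Rof_pt by blast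
  moreover have "\<forall>x y. consec (Rof \<Sigma>) x y \<longrightarrow> idet x y = -1" using consec_in by blast
  ultimately show ?thesis unfolding chain_def using Rof_fin by blast
qed


lemma cover_intro:
  assumes "cone_gen {a, b} \<in> \<Sigma>" "cone_gen {a, b} \<in> fan_of (Rof \<Sigma>)"
    "cone_gen {a} \<in> fan_of (Rof \<Sigma>)" "cone_gen {b} \<in> fan_of (Rof \<Sigma>)" "idet a b \<noteq> 0"
    "q \<in> cone_gen {a, b}"
  shows "\<exists>a b. q \<in> C2 (rv a) (rv b) \<and> dt (rv a) (rv b) \<noteq> 0 \<and> cone_gen {a, b} = C2 (rv a) (rv b) \<and>
     cone_gen {a, b} \<in> \<Sigma> \<and> cone_gen {a, b} \<in> fan_of (Rof \<Sigma>) \<and>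
     cone_gen {a} \<in> fan_of (Rof \<Sigma>) \<and> cone_gen {b} \<in> fan_of (Rof \<Sigma>)"
proof -
  have "cone_gen {a, b} = C2 (rv a) (rv b)" "dt (rv a) (rv b) \<noteq> 0" using cone_pair_C2 assms(5) dt_rv by auto
  then show ?thesis using assms by metis
qed

lemma cover2:
  "\<exists>a b. q \<in> C2 (rv a) (rv b) \<and> dt (rv a) (rv b) \<noteq> 0 \<and> cone_gen {a, b} = C2 (rv a) (rv b) \<and>
     cone_gen {a, b} \<in> \<Sigma> \<and> cone_gen {a, b} \<in> fan_of (Rof \<Sigma>) \<and>
     cone_gen {a} \<in> fan_of (Rof \<Sigma>) \<and> cone_gen {b} \<in> fan_of (Rof \<Sigma>)"
proof -
  have r10: "(1,0) \<in> Rof \<Sigma>" "(0,-1) \<in> Rof \<Sigma>" using chain_Rof unfolding chain_def by auto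
  have f10: "cone_gen {(1,0)} \<in> fan_of (Rof \<Sigma>)" "cone_gen {(0,-1)} \<in> fan_of (Rof \<Sigma>)"
    using r10 unfolding fan_of_def by blast+
  have fx: "cone_gen {(0,1)} \<in> fan_of (Rof \<Sigma>)" "cone_gen {(-1,0)} \<in> fan_of (Rof \<Sigma>)"
    "cone_gen {(1,0),(0,1)} \<in> fan_of (Rof \<Sigma>)" "cone_gen {(-1,0),(0,1)} \<in> fan_of (Rof \<Sigma>)"
    "cone_gen {(-1,0),(0,-1)} \<in> fan_of (Rof \<Sigma>)"
    unfolding fan_of_def fix6_def by blast+
  have id: "idet (1,0) (0,1) \<noteq> 0" "idet (-1,0) (0,1) \<noteq> 0" "idet (-1,0) (0,-1) \<noteq> 0"
    by (simp_all add: idet_def)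
  consider "fst q \<ge> 0 \<and> snd q \<ge> 0" | "fst q \<le> 0 \<and> snd q \<ge> 0" | "fst q \<le> 0 \<and> snd q \<le> 0"
    | "fst q > 0 \<and> snd q < 0" by linarith
  then show ?thesis
  proof cases
    case 1
    then have "q \<in> cone_gen {(1,0),(0,1)}" using Q1_mem by blast
    then show ?thesis using cover_intro[OF S_Q(1)[OF F] fx(3) f10(1) fx(1) id(1)] by blast
  next
    case 2
    then have "q \<in> cone_gen {(-1,0),(0,1)}" using Q2_mem by blast
    then show ?thesis using cover_intro[OF S_Q(3)[OF F] fx(4) fx(2) fx(1) id(2)] by blast
  next
    case 3
    then have "q \<in> cone_gen {(-1,0),(0,-1)}" using Q3_mem by blast
    then show ?thesis using cover_intro[OF S_Q(2)[OF F] fx(5) fx(2) f10(2) id(3)] by blast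
  next
    case 4
    have qq: "q \<in> Q4r" "q \<noteq> 0" using 4 unfolding Q4r_def by auto
    have gq: "0 < gk q" "gk q < 1" using gk_range[OF qq] 4 by auto
    define L where "L = {r\<in>Rof \<Sigma>. gi r \<le> gk q}"
    define U where "U = {r\<in>Rof \<Sigma>. gk q < gi r}"
    have "(1,0) \<in> L" using r10 gi_10 gq unfolding L_def by simp
    then have Lne: "L \<noteq> {}" "finite L" using Rof_fin unfolding L_def by auto
    have "(0,-1) \<in> U" using r10 gi_0m1 gq unfolding U_def by simp
    then have Une: "U \<noteq> {}" "finite U" using Rof_fin unfolding U_def by auto
    obtain x where xL: "x \<in> L" and xmax: "\<forall>z\<in>L. gi z \<le> gi x" using ex_argmax[OF Lne(2,1), of gi] by blast
    obtain y where yU: "y \<in> U" and ymin: "\<forall>z\<in>U. gi y \<le> gi z" using ex_argmin[OF Une(2,1), of gi] by blast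
    have c: "consec (Rof \<Sigma>) x y"
      unfolding consec_def using xL xmax yU ymin unfolding L_def U_def
      by (auto simp: not_less[symmetric])
    have cxy: "cone_gen {x, y} \<in> \<Sigma>" "idet x y = -1" using consec_in[OF c] by auto
    have xyR: "x \<in> Rof \<Sigma>" "y \<in> Rof \<Sigma>" using c unfolding consec_def by auto
    have fr: "cone_gen {x, y} \<in> fan_of (Rof \<Sigma>)" "cone_gen {x} \<in> fan_of (Rof \<Sigma>)" "cone_gen {y} \<in> fan_of (Rof \<Sigma>)"
      using c xyR unfolding fan_of_def by blast+
    have qx: "rv x \<in> Q4r" "rv x \<noteq> 0" and qy: "rv y \<in> Q4r" "rv y \<noteq> 0" using Rof_good xyR by auto
    have "gk (rv x) \<le> gk q" "gk q < gk (rv y)" using xL yU unfolding L_def U_def gi_def by auto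
    then have "q \<in> C2 (rv x) (rv y)" using C2_Q4_mem[OF qx qy] qq by auto
    then have "q \<in> cone_gen {x, y}" using cone_pair_C2 cxy by simp
    then show ?thesis using cover_intro[OF cxy(1) fr] cxy by simp
  qed
qed


lemma classify:
  assumes s: "\<sigma> \<in> \<Sigma>"
  shows "\<sigma> \<in> fan_of (Rof \<Sigma>)"
proof (cases "\<exists>a b. C2 (rv a) (rv b) \<subseteq> \<sigma> \<and> dt (rv a) (rv b) \<noteq> 0 \<and> cone_gen {a, b} = C2 (rv a) (rv b) \<and>
     cone_gen {a, b} \<in> \<Sigma> \<and> cone_gen {a, b} \<in> fan_of (Rof \<Sigma>)")
  case True
  then obtain a b where ab: "C2 (rv a) (rv b) \<subseteq> \<sigma>" "dt (rv a) (rv b) \<noteq> 0"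
    "cone_gen {a, b} = C2 (rv a) (rv b)" "cone_gen {a, b} \<in> \<Sigma>" "cone_gen {a, b} \<in> fan_of (Rof \<Sigma>)" by blast
  have "(\<sigma> \<inter> C2 (rv a) (rv b)) face_of \<sigma>" using S_int[OF F s ab(4)] ab(3) by simp
  then have tf: "C2 (rv a) (rv b) face_of \<sigma>" using ab(1) by (simp add: Int_absorb1)
  have "C2 (rv a) (rv b) = \<sigma>"
  proof (rule ccontr)
    assume "C2 (rv a) (rv b) \<noteq> \<sigma>"
    then have "aff_dim (C2 (rv a) (rv b)) < aff_dim \<sigma>"
      using face_of_aff_dim_lt[OF S_convex[OF F s] tf] by blast
    moreover have "aff_dim (C2 (rv a) (rv b)) = 2" using aff_dim_C2 ab(2) by blast
    moreover have "aff_dim \<sigma> \<le> 2" using aff_dim_le_DIM[of \<sigma>] by simp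
    ultimately show False by simp
  qed
  then show ?thesis using ab by simp
next
  case False
  note nA = False
  have ray: "\<exists>e. cone_gen {e} \<in> fan_of (Rof \<Sigma>) \<and> p \<in> R1 (rv e) \<and> R1 (rv e) \<subseteq> \<sigma> \<and> R1 (rv e) face_of \<sigma>"
    if p: "p \<in> \<sigma>" "p \<noteq> 0" for p
  proof -
    obtain a b where ab: "p \<in> C2 (rv a) (rv b)" "dt (rv a) (rv b) \<noteq> 0" "cone_gen {a, b} = C2 (rv a) (rv b)"
      "cone_gen {a, b} \<in> \<Sigma>" "cone_gen {a, b} \<in> fan_of (Rof \<Sigma>)"
      "cone_gen {a} \<in> fan_of (Rof \<Sigma>)" "cone_gen {b} \<in> fan_of (Rof \<Sigma>)"
      using cover2 by blast
    have I: "(\<sigma> \<inter> C2 (rv a) (rv b)) face_of \<sigma>" "(\<sigma> \<inter> C2 (rv a) (rv b)) face_of C2 (rv a) (rv b)"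
      using S_int[OF F s ab(4)] ab(3) by simp_all
    have ne: "\<sigma> \<inter> C2 (rv a) (rv b) \<noteq> C2 (rv a) (rv b)"
    proof
      assume "\<sigma> \<inter> C2 (rv a) (rv b) = C2 (rv a) (rv b)"
      then have "C2 (rv a) (rv b) \<subseteq> \<sigma>" by blast
      then show False using nA ab by blast
    qed
    have pin: "p \<in> \<sigma> \<inter> C2 (rv a) (rv b)" using p ab(1) by blast
    have "\<sigma> \<inter> C2 (rv a) (rv b) = {} \<or> \<sigma> \<inter> C2 (rv a) (rv b) = {0} \<or>
      \<sigma> \<inter> C2 (rv a) (rv b) = R1 (rv a) \<or> \<sigma> \<inter> C2 (rv a) (rv b) = R1 (rv b) \<or>
      \<sigma> \<inter> C2 (rv a) (rv b) = C2 (rv a) (rv b)" using faces_C2[OF ab(2) I(2)] .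
    then have "\<sigma> \<inter> C2 (rv a) (rv b) = R1 (rv a) \<or> \<sigma> \<inter> C2 (rv a) (rv b) = R1 (rv b)"
      using ne pin p(2) by auto
    then show ?thesis
    proof
      assume h: "\<sigma> \<inter> C2 (rv a) (rv b) = R1 (rv a)"
      then have "p \<in> R1 (rv a)" "R1 (rv a) \<subseteq> \<sigma>" "R1 (rv a) face_of \<sigma>" using pin I(1) by auto
      then show ?thesis using ab(6) by blast
    next
      assume h: "\<sigma> \<inter> C2 (rv a) (rv b) = R1 (rv b)"
      then have "p \<in> R1 (rv b)" "R1 (rv b) \<subseteq> \<sigma>" "R1 (rv b) face_of \<sigma>" using pin I(1) by auto
      then show ?thesis using ab(7) by blast
    qed
  qed
  show ?thesis
  proof (cases "\<sigma> \<subseteq> {0}")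
    case True
    then have "\<sigma> = cone_gen {}" using S_zero[OF F s] cone_gen_empty by auto
    then show ?thesis unfolding fan_of_def fix6_def by blast
  next
    case False
    then obtain p where p: "p \<in> \<sigma>" "p \<noteq> 0" by blast
    obtain e where e: "cone_gen {e} \<in> fan_of (Rof \<Sigma>)" "p \<in> R1 (rv e)" "R1 (rv e) \<subseteq> \<sigma>"
      using ray[OF p] by blast
    have "\<sigma> \<subseteq> R1 (rv e)"
    proof
      fix q assume q: "q \<in> \<sigma>"
      show "q \<in> R1 (rv e)"
      proof (rule ccontr)
        assume nq: "q \<notin> R1 (rv e)"
        have m: "p + q \<in> \<sigma>" using S_add[OF F s p(1) q] .
        have m0: "p + q \<noteq> 0"
        proof
          assume "p + q = 0"
          then have "p = - q" by (simp add: eq_neg_iff_add_eq_0)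
          then have "p \<in> uminus ` \<sigma>" using q by blast
          then have "p \<in> \<sigma> \<inter> uminus ` \<sigma>" using p by blast
          then show False using S_sc[OF F s] p(2) by blast
        qed
        obtain e' where e': "p + q \<in> R1 (rv e')" "R1 (rv e') face_of \<sigma>" using ray[OF m m0] by blast
        have s2: "2 *\<^sub>R p \<in> \<sigma>" "2 *\<^sub>R q \<in> \<sigma>" using S_scale[OF F s] p q by simp_all
        have ne: "2 *\<^sub>R p \<noteq> 2 *\<^sub>R q" using nq e(2) by auto
        have "p + q = (1 - 1/2) *\<^sub>R (2 *\<^sub>R p) + (1/2) *\<^sub>R (2 *\<^sub>R q)" by simp
        then have "p + q \<in> open_segment (2 *\<^sub>R p) (2 *\<^sub>R q)" unfolding in_segment using ne
          by (intro conjI exI[of _ "1/2"]) auto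
        then have "2 *\<^sub>R p \<in> R1 (rv e') \<and> 2 *\<^sub>R q \<in> R1 (rv e')"
          using face_ofD[OF e'(2) _ s2 e'(1)] by blast
        then have "(1/2) *\<^sub>R (2 *\<^sub>R p) \<in> R1 (rv e')" "(1/2) *\<^sub>R (2 *\<^sub>R q) \<in> R1 (rv e')"
          using R1_scale[of "2 *\<^sub>R p" "rv e'" "1/2"] R1_scale[of "2 *\<^sub>R q" "rv e'" "1/2"] by simp_all
        then have pe: "p \<in> R1 (rv e')" "q \<in> R1 (rv e')" by simp_all
        then have "R1 (rv e) = R1 (rv e')" using R1_eq[OF e(2) pe(1) p(2)] by blast
        then show False using nq pe(2) by simp
      qed
    qed
    then have "\<sigma> = R1 (rv e)" using e by blast
    then show ?thesis using e cone_gen_single by simp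
  qed
qed

lemma Sigma_eq: "\<Sigma> = fan_of (Rof \<Sigma>)"
proof
  show "\<Sigma> \<subseteq> fan_of (Rof \<Sigma>)" using classify by blast
  have "fix6 \<subseteq> \<Sigma>" unfolding fix6_def using basic_in S_Q[OF F] by blast
  moreover have "(\<lambda>w. cone_gen {w}) ` Rof \<Sigma> \<subseteq> \<Sigma>" using Rof_pt by blast
  moreover have "{cone_gen {x, y} | x y. consec (Rof \<Sigma>) x y} \<subseteq> \<Sigma>" using consec_in by blast
  ultimately show "fan_of (Rof \<Sigma>) \<subseteq> \<Sigma>" unfolding fan_of_def by blast
qed

end

theorem main_thm:
  assumes "\<Sigma> \<in> cFan_sc"
  shows "subdivision_step\<^sup>*\<^sup>* Sigma0000 \<Sigma>"
  using Sigma_eq[OF assms] forward[OF chain_Rof[OF assms]] by simp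


theorem proposition2p10:
  assumes "\<Sigma> \<in> cFan_sc"
  shows "subdivision_step\<^sup>*\<^sup>* Sigma0000 \<Sigma>"
  using main_thm[OF assms] .

end
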